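(* Let $k,n$ be non-negative integers and let $p_1,\dots,p_{k+1}$ be primes (not necessarily distinct) with each $p_i\equiv 3,5,$ or $7\pmod 8$. Then for every integer $j$ not divisible by $p_{k+1}$, $$\mathcal{J}_{6}\Big(3p_1^2p_2^2\cdots p_k^2\,p_{k+1}\,\big(8p_{k+1}n+8j+p_{k+1}\big)\Big)\equiv 0\pmod 2.$$
   Context: Let $q=e^{2\pi i\tau}$, $(a;q)_\infty=\prod_{j\ge0}(1-aq^j)$, and $\eta(\tau)=q^{1/24}(q;q)_\infty$. Define $$j_6(\tau)=\left(\frac{\eta(2\tau)\eta(3\tau)^3}{\eta(\tau)\eta(6\tau)^3}\right)^3-3=\frac1q+\sum_{n\ge0}\mathcal{J}_6(n)q^n.$$ *)

theory Defs
  imports "HOL-Computational_Algebra.Formal_Power_Series" "HOL-Computational_Algebra.Primes"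
begin

text \<open>Formal power series of the q-Pochhammer symbol (q^m;q^m)_infinity = prod_{j>=1} (1 - q^(m j)).
  Its n-th coefficient agrees with the one of the finite product over j = 1..n.\<close>
definition qpoch :: "nat \<Rightarrow> rat fps" where
  "qpoch m = Abs_fps (\<lambda>n. fps_nth (\<Prod>j\<in>{1..n}. (1 - fps_X ^ (m * j))) n)"

text \<open>P(q) = q * (j_6 + 3) = ((q^2;q^2)(q^3;q^3)^3 / ((q;q)(q^6;q^6)^3))^3 as a formal power series
  (the eta-quotient equals q^(-1) * P(q), since (2 + 9 - 1 - 18)/24 * 3 = -1).\<close>
definition j6P :: "rat fps" where
  "j6P = ((qpoch 2 * qpoch 3 ^ 3) / (qpoch 1 * qpoch 6 ^ 3)) ^ 3"

text \<open>Coefficient of q^m in j_6 = 1/q + sum_{n>=0} J_6(n) q^n; zero for m < -1.\<close>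
definition J6 :: "int \<Rightarrow> rat" where
  "J6 m = (if m < -1 then 0
           else fps_nth j6P (nat (m + 1)) - (if m = 0 then 3 else 0))"

end

theory Submission
  imports Defs "HOL-Library.Z2"
begin


definition qp :: "nat \<Rightarrow> 'a::comm_ring_1 fps" where
  "qp m = Abs_fps (\<lambda>n. fps_nth (\<Prod>j\<in>{1..n}. (1 - fps_X ^ (m * j))) n)"

lemma qpoch_qp: "qpoch m = qp m"
  by (simp add: qpoch_def qp_def)

definition fmapI :: "int fps \<Rightarrow> 'a::comm_ring_1 fps" where
  "fmapI A = Abs_fps (\<lambda>n. of_int ((fps_nth (A) n)))"

lemma fmapI_nth[simp]: "(fps_nth (fmapI A) n) = of_int ((fps_nth (A) n))"
  by (simp add: fmapI_def)

lemma fmapI_mult: "fmapI (A * B) = (fmapI A * fmapI B :: 'a::comm_ring_1 fps)"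
  by (rule fps_ext) (simp add: fps_mult_nth of_int_sum)

lemma fmapI_add: "fmapI (A + B) = (fmapI A + fmapI B :: 'a::comm_ring_1 fps)"
  by (rule fps_ext) simp

lemma fmapI_diff: "fmapI (A - B) = (fmapI A - fmapI B :: 'a::comm_ring_1 fps)"
  by (rule fps_ext) simp

lemma fmapI_one: "fmapI 1 = (1 :: 'a::comm_ring_1 fps)"
  by (rule fps_ext) simp

lemma fmapI_X_power: "fmapI (fps_X ^ k) = (fps_X ^ k :: 'a::comm_ring_1 fps)"
  by (rule fps_ext) (simp add: fps_X_power_iff)

lemma fmapI_power: "fmapI (A ^ k) = (fmapI A ^ k :: 'a::comm_ring_1 fps)"
  by (induction k) (simp_all add: fmapI_one fmapI_mult)

lemma fmapI_prod: "fmapI (\<Prod>j\<in>S. f j) = (\<Prod>j\<in>S. fmapI (f j) :: 'a::comm_ring_1 fps)"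
  by (induction S rule: infinite_finite_induct) (simp_all add: fmapI_one fmapI_mult)

lemma fmapI_qp: "fmapI (qp m) = (qp m :: 'a::comm_ring_1 fps)"
proof (rule fps_ext)
  fix n
  have "fmapI (\<Prod>j\<in>{1..n}. (1 - fps_X ^ (m * j))) = (\<Prod>j\<in>{1..n}. (1 - fps_X ^ (m * j)) :: 'a fps)"
    by (simp add: fmapI_prod fmapI_diff fmapI_one fmapI_X_power)
  then have "of_int ((fps_nth ((\<Prod>j\<in>{1..n}. (1 - fps_X ^ (m * j)) :: int fps)) n))
      = (fps_nth (((\<Prod>j\<in>{1..n}. (1 - fps_X ^ (m * j))) :: 'a fps)) n)"
    by (metis fmapI_nth)
  then show "(fps_nth (fmapI (qp m)) n) = (fps_nth ((qp m :: 'a fps)) n)"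
    by (simp add: qp_def)
qed

lemma qp_nth0[simp]: "(fps_nth (qp m) 0) = 1"
  by (simp add: qp_def)

definition eqm :: "nat \<Rightarrow> 'a::comm_ring_1 fps \<Rightarrow> 'a fps \<Rightarrow> bool" where
  "eqm K A B \<longleftrightarrow> (\<forall>i<K. (fps_nth (A) i) = (fps_nth (B) i))"

lemma eqm_refl[simp]: "eqm K A A" by (simp add: eqm_def)
lemma eqm_sym: "eqm K A B \<Longrightarrow> eqm K B A" by (simp add: eqm_def)
lemma eqm_trans: "eqm K A B \<Longrightarrow> eqm K B C \<Longrightarrow> eqm K A C" by (simp add: eqm_def)
lemma eqm_mono: "eqm K A B \<Longrightarrow> K' \<le> K \<Longrightarrow> eqm K' A B" by (simp add: eqm_def)
lemma eqm_add: "eqm K A B \<Longrightarrow> eqm K C D \<Longrightarrow> eqm K (A + C) (B + D)" by (simp add: eqm_def)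

lemma eqm_multR: "eqm K A B \<Longrightarrow> eqm K (A * C) (B * C)"
  unfolding eqm_def fps_mult_nth by (auto intro!: sum.cong)

lemma eqm_multL: "eqm K A B \<Longrightarrow> eqm K (C * A) (C * B)"
  using eqm_multR[of K A B C] by (simp add: mult.commute)

lemma eqm_mult: "eqm K A B \<Longrightarrow> eqm K C D \<Longrightarrow> eqm K (A * C) (B * D)"
  by (meson eqm_multL eqm_multR eqm_trans)

lemma eqm_power: "eqm K A B \<Longrightarrow> eqm K (A ^ n) (B ^ n)"
  by (induction n) (simp_all add: eqm_mult)

lemma eqm_X_power_0: "K \<le> d \<Longrightarrow> eqm K (fps_X ^ d * A) 0"
  unfolding eqm_def by (auto simp: fps_X_power_mult_nth)

lemma eqm_one_minus: "K \<le> d \<Longrightarrow> eqm K (1 - fps_X ^ d) 1"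
  unfolding eqm_def by (auto simp: fps_X_power_iff)

lemma eqm_one_plus: "K \<le> d \<Longrightarrow> eqm K (1 + fps_X ^ d) 1"
  unfolding eqm_def by (auto simp: fps_X_power_iff)

lemma eqm_prod_one: "(\<And>j. j \<in> S \<Longrightarrow> eqm K (f j) 1) \<Longrightarrow> eqm K (\<Prod>j\<in>S. f j) 1"
proof (induction S rule: infinite_finite_induct)
  case (insert x F)
  then have "eqm K (f x * (\<Prod>j\<in>F. f j)) (1 * 1)" by (intro eqm_mult) auto
  then show ?case using insert by simp
qed simp_all

lemma eqm_nth: "eqm K A B \<Longrightarrow> i < K \<Longrightarrow> (fps_nth (A) i) = (fps_nth (B) i)" by (simp add: eqm_def)

lemma qp_eqm:
  assumes "m \<ge> 1" "K \<le> M + 1"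
  shows "eqm K (qp m) ((\<Prod>j\<in>{1..M}. (1 - fps_X ^ (m * j))) :: 'a::comm_ring_1 fps)"
  unfolding eqm_def
proof (intro allI impI)
  fix i assume "i < K"
  then have iM: "i \<le> M" using assms by simp
  have split: "{1..M} = {1..i} \<union> {i+1..M}" using iM by auto
  have "(\<Prod>j\<in>{1..M}. (1 - fps_X ^ (m * j)) :: 'a fps)
      = (\<Prod>j\<in>{1..i}. (1 - fps_X ^ (m * j))) * (\<Prod>j\<in>{i+1..M}. (1 - fps_X ^ (m * j)))"
    unfolding split by (rule prod.union_disjoint) auto
  moreover have "eqm (i+1) (\<Prod>j\<in>{i+1..M}. (1 - fps_X ^ (m * j)) :: 'a fps) 1"
  proof (rule eqm_prod_one, rule eqm_one_minus)
    fix j assume "j \<in> {i+1..M}"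
    then have "j \<ge> i + 1" by simp
    then show "i + 1 \<le> m * j" using assms(1)
      by (metis dual_order.trans mult_1 mult_le_mono1)
  qed
  ultimately have "eqm (i+1) (\<Prod>j\<in>{1..M}. (1 - fps_X ^ (m * j)) :: 'a fps) (\<Prod>j\<in>{1..i}. (1 - fps_X ^ (m * j)))"
    using eqm_multL[of "i+1" _ 1 "\<Prod>j\<in>{1..i}. (1 - fps_X ^ (m * j)) :: 'a fps"] by simp
  then show "(fps_nth (qp m) i) = (fps_nth ((\<Prod>j\<in>{1..M}. (1 - fps_X ^ (m * j)) :: 'a fps)) i)"
    by (simp add: qp_def eqm_def)
qed

definition dil :: "nat \<Rightarrow> 'a::comm_ring_1 fps \<Rightarrow> 'a fps" where
  "dil k A = Abs_fps (\<lambda>n. if k dvd n then (fps_nth (A) (n div k)) else 0)"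

lemma dil_nth: "(fps_nth (dil k A) n) = (if k dvd n then (fps_nth (A) (n div k)) else 0)"
  by (simp add: dil_def)

lemma dil_nth_mult[simp]: "k > 0 \<Longrightarrow> (fps_nth (dil k A) (k * n)) = (fps_nth (A) n)"
  by (simp add: dil_def)

lemma dil_add: "dil k (A + B) = dil k A + dil k B"
  by (rule fps_ext) (simp add: dil_nth)

lemma dil_diff: "dil k (A - B) = dil k A - dil k B"
  by (rule fps_ext) (simp add: dil_nth)

lemma dil_one: "k > 0 \<Longrightarrow> dil k 1 = 1"
  by (rule fps_ext) (auto simp add: dil_nth elim!: dvdE)

lemma dil_X_power: "k > 0 \<Longrightarrow> dil k (fps_X ^ j) = fps_X ^ (k * j)"
  by (rule fps_ext) (auto simp add: dil_nth fps_X_power_iff elim!: dvdE)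

lemma dil_mult:
  assumes k: "k > 0"
  shows "dil k (A * B) = dil k A * dil k B"
proof (rule fps_ext)
  fix n
  show "(fps_nth (dil k (A * B)) n) = (fps_nth ((dil k A * dil k B)) n)"
  proof (cases "k dvd n")
    case False
    have "(fps_nth ((dil k A * dil k B)) n) = 0"
      unfolding fps_mult_nth
    proof (rule sum.neutral, intro ballI)
      fix i assume "i \<in> {0..n}"
      then have "k dvd i \<Longrightarrow> k dvd (n - i) \<Longrightarrow> k dvd n"
        by (metis atLeastAtMost_iff dvd_add le_add_diff_inverse)
      then show "(fps_nth (dil k A) i) * (fps_nth (dil k B) (n - i)) = 0" using False by (auto simp: dil_nth)
    qed
    then show ?thesis using False by (simp add: dil_nth)
  next
    case True
    then obtain m where n: "n = k * m" by (auto elim!: dvdE)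
    have "(fps_nth ((dil k A * dil k B)) n) = (\<Sum>i\<in>{0..n}. (fps_nth (dil k A) i) * (fps_nth (dil k B) (n - i)))"
      by (simp add: fps_mult_nth)
    also have "\<dots> = (\<Sum>i\<in>(\<lambda>i. k * i) ` {0..m}. (fps_nth (dil k A) i) * (fps_nth (dil k B) (n - i)))"
    proof (rule sum.mono_neutral_right)
      show "(\<lambda>i. k * i) ` {0..m} \<subseteq> {0..n}" using n k by auto
      show "\<forall>i\<in>{0..n} - (\<lambda>i. k * i) ` {0..m}. (fps_nth (dil k A) i) * (fps_nth (dil k B) (n - i)) = 0"
      proof
        fix i assume i: "i \<in> {0..n} - (\<lambda>i. k * i) ` {0..m}"
        show "(fps_nth (dil k A) i) * (fps_nth (dil k B) (n - i)) = 0"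
        proof (cases "k dvd i")
          case True
          then obtain l where "i = k * l" by (auto elim!: dvdE)
          with i n k have False by auto
          then show ?thesis ..
        qed (simp add: dil_nth)
      qed
    qed simp
    also have "\<dots> = (\<Sum>i\<in>{0..m}. (fps_nth (dil k A) (k * i)) * (fps_nth (dil k B) (n - k * i)))"
      using k by (simp add: sum.reindex inj_on_def)
    also have "\<dots> = (\<Sum>i\<in>{0..m}. (fps_nth (A) i) * (fps_nth (B) (m - i)))"
    proof (rule sum.cong)
      fix i assume "i \<in> {0..m}"
      then have "n - k * i = k * (m - i)" using n by (simp add: diff_mult_distrib2)
      then show "(fps_nth (dil k A) (k * i)) * (fps_nth (dil k B) (n - k * i)) = (fps_nth (A) i) * (fps_nth (B) (m - i))" using k by simp
    qed simp
    finally show ?thesis using n k by (simp add: fps_mult_nth)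
  qed
qed

lemma dil_power: "k > 0 \<Longrightarrow> dil k (A ^ n) = dil k A ^ n"
  by (induction n) (simp_all add: dil_one dil_mult)

lemma dil_prod: "k > 0 \<Longrightarrow> dil k (\<Prod>j\<in>S. f j) = (\<Prod>j\<in>S. dil k (f j))"
  by (induction S rule: infinite_finite_induct) (simp_all add: dil_one dil_mult)

lemma dil_dil: "a > 0 \<Longrightarrow> b > 0 \<Longrightarrow> dil a (dil b A) = dil (a * b) A"
  by (rule fps_ext) (auto simp: dil_nth dvd_div_iff_mult div_mult2_eq mult.commute elim!: dvdE)

lemma dil_eqm: "k > 0 \<Longrightarrow> eqm K A B \<Longrightarrow> eqm K (dil k A) (dil k B)"
  unfolding eqm_def dil_nth
  by (metis div_le_dividend le_less_trans)

lemma qp_dil: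
  assumes k: "k \<ge> 1"
  shows "qp k = (dil k (qp 1) :: 'a::comm_ring_1 fps)"
proof (rule fps_ext)
  fix n
  let ?P = "\<lambda>m. (\<Prod>j\<in>{1..n}. (1 - fps_X ^ (m * j))) :: 'a fps"
  have "dil k (?P 1) = ?P k"
    using k by (simp add: dil_prod dil_diff dil_one dil_X_power)
  have e1: "eqm (n+1) (qp k) (?P k)" by (rule qp_eqm) (use k in auto)
  have e2: "eqm (n+1) (dil k (qp 1)) (dil k (?P 1))"
    by (rule dil_eqm) (use k qp_eqm[of 1 "n+1" n] in auto)
  have a: "(fps_nth (qp k) n) = (fps_nth (?P k) n)" by (rule eqm_nth[OF e1]) simp
  have b: "(fps_nth (dil k (qp 1)) n) = (fps_nth (dil k (?P 1)) n)" by (rule eqm_nth[OF e2]) simp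
  show "(fps_nth (qp k) n) = (fps_nth ((dil k (qp 1) :: 'a fps)) n)"
  proof -
    have d: "(fps_nth (dil k (qp 1)) n) = (fps_nth (?P k) n)" using b \<open>dil k (?P 1) = ?P k\<close> by simp
    show ?thesis using a d by simp
  qed
qed


definition psi :: "'a::comm_ring_1 fps" where
  "psi = Abs_fps (\<lambda>e. of_bool (\<exists>x::int. x ^ 2 = 8 * int e + 1))"

lemma psi_nth: "(fps_nth (psi) e) = of_bool (\<exists>x::int. x ^ 2 = 8 * int e + 1)"
  by (simp add: psi_def)

lemma psi_nth0[simp]: "(fps_nth ((psi :: 'a::comm_ring_1 fps)) 0) = 1"
proof -
  have "\<exists>x::int. x ^ 2 = 8 * int 0 + 1" by (rule exI[of _ 1]) simp
  then show ?thesis by (simp add: psi_nth)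
qed

lemma odd_sq_mod8: "odd (x::int) \<Longrightarrow> \<exists>a. x ^ 2 = 8 * a + 1"
proof -
  assume "odd x"
  then obtain y where y: "x = 2 * y + 1" by (auto elim: oddE)
  have "even (y * (y + 1))" by simp
  then obtain b where b: "y * (y + 1) = 2 * b" by (blast elim: evenE)
  have "x ^ 2 = 4 * (y * (y + 1)) + 1" by (simp add: y power2_eq_square algebra_simps)
  also have "\<dots> = 8 * b + 1" by (simp add: b)
  finally show ?thesis by blast
qed

lemma parity_inv:
  assumes "finite S" "\<And>x. x \<in> S \<Longrightarrow> g x \<in> S" "\<And>x. x \<in> S \<Longrightarrow> g (g x) = x"
  shows "(of_nat (card S) :: bit) = of_nat (card {x\<in>S. g x = x})"
  using assms
proof (induction "card S" arbitrary: S rule: less_induct)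
  case less
  show ?case
  proof (cases "\<exists>a\<in>S. g a \<noteq> a")
    case False
    then have "{x\<in>S. g x = x} = S" by auto
    then show ?thesis by simp
  next
    case True
    then obtain a where a: "a \<in> S" "g a \<noteq> a" by blast
    have ga: "g a \<in> S" using less.prems a by auto
    define S' where "S' = S - {a, g a}"
    have fin': "finite S'" using less.prems by (simp add: S'_def)
    have c2: "card {a, g a} = 2" using a by auto
    have cS: "card S' = card S - 2" unfolding S'_def
      using less.prems a ga c2 by (subst card_Diff_subset) auto
    have ge2: "card S \<ge> 2"
      using c2 card_mono[OF less.prems(1), of "{a, g a}"] a ga by auto
    have maps: "g x \<in> S'" if "x \<in> S'" for x
    proof -
      have x: "x \<in> S" "x \<noteq> a" "x \<noteq> g a" using that by (auto simp: S'_def)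
      have "g x \<noteq> a" using x less.prems(3) by metis
      moreover have "g x \<noteq> g a" using x less.prems(3) a by metis
      ultimately show ?thesis using x less.prems(2) by (auto simp: S'_def)
    qed
    have inv: "g (g x) = x" if "x \<in> S'" for x using that less.prems(3) by (auto simp: S'_def)
    have IH: "(of_nat (card S') :: bit) = of_nat (card {x\<in>S'. g x = x})"
      using less.hyps[of S'] cS ge2 fin' maps inv by simp
    have "{x\<in>S'. g x = x} = {x\<in>S. g x = x}"
      using a less.prems(3)[OF a(1)] by (auto simp: S'_def)
    moreover have "card S = card S' + 2" using cS ge2 by simp
    ultimately show ?thesis using IH by simp
  qed
qed

definition gI :: "int \<times> int \<Rightarrow> int \<times> int" where
"gI = (\<lambda>(x,y). if (x - y) mod 4 = 0 then (\<bar>x - 3*y\<bar> div 2, (x + y) div 2) else ((x + 3*y) div 2, \<bar>x - y\<bar> div 2))"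

lemma gI_A: "(x - y) mod 4 = 0 \<Longrightarrow> 2 * s = x - 3 * y \<Longrightarrow> 2 * t = x + y \<Longrightarrow> gI (x, y) = (\<bar>s\<bar>, t)"
proof -
  assume a: "(x - y) mod 4 = 0" "2 * s = x - 3 * y" "2 * t = x + y"
  have "\<bar>x - 3 * y\<bar> div 2 = \<bar>s\<bar>" using a(2)[symmetric] by (simp add: abs_mult)
  moreover have "(x + y) div 2 = t" using a(3)[symmetric] by simp
  ultimately show ?thesis using a(1) by (simp add: gI_def)
qed

lemma gI_B: "(x - y) mod 4 \<noteq> 0 \<Longrightarrow> 2 * s = x + 3 * y \<Longrightarrow> 2 * t = x - y \<Longrightarrow> gI (x, y) = (s, \<bar>t\<bar>)"
proof -
  assume a: "(x - y) mod 4 \<noteq> 0" "2 * s = x + 3 * y" "2 * t = x - y"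
  have "\<bar>x - y\<bar> div 2 = \<bar>t\<bar>" using a(3)[symmetric] by (simp add: abs_mult)
  moreover have "(x + 3 * y) div 2 = s" using a(2)[symmetric] by simp
  ultimately show ?thesis using a(1) by (simp add: gI_def)
qed

lemma gI_props:
  fixes x y :: int
  assumes xy: "odd x" "odd y" "x > 0" "y > 0"
  shows "fst (gI (x, y)) > 0 \<and> snd (gI (x, y)) > 0 \<and> odd (fst (gI (x, y))) \<and> odd (snd (gI (x, y)))
         \<and> gI (gI (x, y)) = (x, y) \<and> (gI (x, y) = (x, y) \<longleftrightarrow> x = y \<or> x = 3 * y)"
proof -
  have "even (x - 3 * y)" using xy(1,2) by presburger
  then obtain s1 where s1: "x - 3 * y = 2 * s1" by (blast elim: evenE)
  have "even (x + y)" using xy(1,2) by presburger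
  then obtain t1 where t1: "x + y = 2 * t1" by (blast elim: evenE)
  have "even (x + 3 * y)" using xy(1,2) by presburger
  then obtain s2 where s2: "x + 3 * y = 2 * s2" by (blast elim: evenE)
  have "even (x - y)" using xy(1,2) by presburger
  then obtain t2 where t2: "x - y = 2 * t2" by (blast elim: evenE)
  show ?thesis
  proof (cases "(x - y) mod 4 = 0")
    case A: True
    have g: "gI (x, y) = (\<bar>s1\<bar>, t1)" by (rule gI_A[OF A]) (use s1 t1 in simp_all)
    have t1p: "t1 > 0" using t1 xy by simp
    have et2: "even t2" using A t2 by presburger
    have ot1: "odd t1" using et2 t1 t2 xy(2) by presburger
    have os1: "odd s1" using et2 s1 t2 xy(2) by presburger
    then have s1nz: "s1 \<noteq> 0" by presburger
    have inv: "gI (\<bar>s1\<bar>, t1) = (x, y)"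
    proof (cases "s1 \<ge> 0")
      case True
      have "(s1 - t1) mod 4 \<noteq> 0" using s1 t1 xy(2) by presburger
      then have "gI (s1, t1) = (x, \<bar>- y\<bar>)" by (rule gI_B) (use s1 t1 in simp_all)
      then show ?thesis using True xy(4) by simp
    next
      case False
      have "(- s1 - t1) mod 4 = 0" using s1 t1 A by presburger
      then have "gI (- s1, t1) = (\<bar>- x\<bar>, y)" by (rule gI_A) (use s1 t1 in simp_all)
      then show ?thesis using False xy(3) by simp
    qed
    have fx: "gI (x, y) = (x, y) \<longleftrightarrow> x = y \<or> x = 3 * y"
    proof
      assume "gI (x, y) = (x, y)"
      then have "t1 = y" using g by simp
      then show "x = y \<or> x = 3 * y" using t1 by simp
    next
      assume "x = y \<or> x = 3 * y"
      moreover have "x \<noteq> 3 * y" using A xy(2) by presburger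
      ultimately have "x = y" by blast
      then show "gI (x, y) = (x, y)" using g s1 t1 xy(3) by simp
    qed
    show ?thesis using g t1p ot1 os1 s1nz inv fx by simp
  next
    case B: False
    have g: "gI (x, y) = (s2, \<bar>t2\<bar>)" by (rule gI_B[OF B]) (use s2 t2 in simp_all)
    have s2p: "s2 > 0" using s2 xy by simp
    have ot2: "odd t2" using B t2 by presburger
    have os2: "odd s2" using ot2 s2 t2 by presburger
    then have t2nz: "t2 \<noteq> 0" using ot2 by presburger
    have inv: "gI (s2, \<bar>t2\<bar>) = (x, y)"
    proof (cases "t2 \<ge> 0")
      case True
      have "(s2 - t2) mod 4 \<noteq> 0" using s2 t2 xy(2) by presburger
      then have "gI (s2, t2) = (x, \<bar>y\<bar>)" by (rule gI_B) (use s2 t2 in simp_all)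
      then show ?thesis using True xy(4) by simp
    next
      case False
      have "(s2 - - t2) mod 4 = 0" using s2 t2 B xy(2) by presburger
      then have "gI (s2, - t2) = (\<bar>x\<bar>, y)" by (rule gI_A) (use s2 t2 in simp_all)
      then show ?thesis using False xy(3) by simp
    qed
    have fx: "gI (x, y) = (x, y) \<longleftrightarrow> x = y \<or> x = 3 * y"
    proof
      assume "gI (x, y) = (x, y)"
      then have "s2 = x" using g by simp
      then show "x = y \<or> x = 3 * y" using s2 by simp
    next
      assume "x = y \<or> x = 3 * y"
      moreover have "x \<noteq> y" using B by auto
      ultimately have "x = 3 * y" by blast
      then show "gI (x, y) = (x, y)" using g s2 t2 xy(4) by simp
    qed
    show ?thesis using g s2p ot2 os2 t2nz inv fx by simp
  qed
qed

lemma gI_pos: "odd x \<Longrightarrow> odd y \<Longrightarrow> x > 0 \<Longrightarrow> y > 0 \<Longrightarrow> gI (x,y) = (u,v) \<Longrightarrow> u > 0 \<and> v > 0 \<and> odd u \<and> odd v"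
  using gI_props[of x y] by simp

lemma gI_inv: "odd x \<Longrightarrow> odd y \<Longrightarrow> x > 0 \<Longrightarrow> y > 0 \<Longrightarrow> gI (gI (x,y)) = (x,y)"
  using gI_props[of x y] by simp

lemma gI_fix: "odd x \<Longrightarrow> odd y \<Longrightarrow> x > 0 \<Longrightarrow> y > 0 \<Longrightarrow> (gI (x,y) = (x,y)) = (x = y \<or> x = 3 * y)"
  using gI_props[of x y] by simp

lemma norm1:
  fixes x y s t :: int
  assumes "2 * s = x - 3 * y" "2 * t = x + y"
  shows "s ^ 2 + 3 * t ^ 2 = x ^ 2 + 3 * y ^ 2"
proof -
  have "4 * (s ^ 2 + 3 * t ^ 2) = (2 * s) ^ 2 + 3 * (2 * t) ^ 2" by (simp add: power2_eq_square algebra_simps)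
  also have "\<dots> = (x - 3 * y) ^ 2 + 3 * (x + y) ^ 2" using assms by simp
  also have "\<dots> = 4 * (x ^ 2 + 3 * y ^ 2)" by (simp add: power2_eq_square algebra_simps)
  finally show ?thesis by simp
qed

lemma norm2:
  fixes x y s t :: int
  assumes "2 * s = x + 3 * y" "2 * t = x - y"
  shows "s ^ 2 + 3 * t ^ 2 = x ^ 2 + 3 * y ^ 2"
proof -
  have "4 * (s ^ 2 + 3 * t ^ 2) = (2 * s) ^ 2 + 3 * (2 * t) ^ 2" by (simp add: power2_eq_square algebra_simps)
  also have "\<dots> = (x + 3 * y) ^ 2 + 3 * (x - y) ^ 2" using assms by simp
  also have "\<dots> = 4 * (x ^ 2 + 3 * y ^ 2)" by (simp add: power2_eq_square algebra_simps)
  finally show ?thesis by simp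
qed

lemma gI_norm:
  assumes "odd x" "odd y" "gI (x,y) = (u,v)"
  shows "u ^ 2 + 3 * v ^ 2 = x ^ 2 + 3 * y ^ 2"
proof (cases "(x - y) mod 4 = 0")
  case True
  then have uv: "u = \<bar>x - 3*y\<bar> div 2" "v = (x + y) div 2" using assms(3) by (auto simp: gI_def)
  have "even (x - 3 * y)" "even (x + y)" using assms(1,2) by presburger+
  then obtain s t where s: "x - 3 * y = 2 * s" and t: "x + y = 2 * t" by (blast elim: evenE)
  have us: "u = \<bar>s\<bar>" "v = t" using uv s t by (simp_all add: abs_mult)
  have n: "s ^ 2 + 3 * t ^ 2 = x ^ 2 + 3 * y ^ 2" by (rule norm1; simp only: s t)
  show ?thesis unfolding us power2_abs by (rule n)
next
  case False
  then have uv: "u = (x + 3*y) div 2" "v = \<bar>x - y\<bar> div 2" using assms(3) by (auto simp: gI_def)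
  have "even (x + 3 * y)" "even (x - y)" using assms(1,2) by presburger+
  then obtain s t where s: "x + 3 * y = 2 * s" and t: "x - y = 2 * t" by (blast elim: evenE)
  have us: "u = s" "v = \<bar>t\<bar>" using uv s t by (simp_all add: abs_mult)
  have n: "s ^ 2 + 3 * t ^ 2 = x ^ 2 + 3 * y ^ 2" by (rule norm2; simp only: s t)
  show ?thesis unfolding us power2_abs by (rule n)
qed


definition TT :: "nat \<Rightarrow> (int \<times> int) set" where
  "TT e = {p. 0 < fst p \<and> 0 < snd p \<and> odd (fst p) \<and> odd (snd p) \<and> fst p ^ 2 + 3 * snd p ^ 2 = 8 * int e + 4}"

lemma TT_mem: "(x, y) \<in> TT e \<longleftrightarrow> 0 < x \<and> 0 < y \<and> odd x \<and> odd y \<and> x ^ 2 + 3 * y ^ 2 = 8 * int e + 4"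
  by (simp add: TT_def)

lemma le_sq: "0 < (x::int) \<Longrightarrow> x \<le> x ^ 2"
proof -
  assume "0 < x"
  then have "x * 1 \<le> x * x" by (intro mult_left_mono) auto
  then show ?thesis by (simp add: power2_eq_square)
qed

lemma TT_finite: "finite (TT e)"
proof (rule finite_subset)
  show "TT e \<subseteq> {1..8 * int e + 4} \<times> {1..8 * int e + 4}"
  proof
    fix p assume p: "p \<in> TT e"
    obtain x y where pxy: "p = (x, y)" by (cases p)
    from p have h: "0 < x" "0 < y" "x ^ 2 + 3 * y ^ 2 = 8 * int e + 4" by (auto simp: TT_mem pxy)
    have "x \<le> x ^ 2" "y \<le> y ^ 2" using h le_sq by auto
    moreover have "0 \<le> x ^ 2" "0 \<le> y ^ 2" by simp_all
    ultimately show "p \<in> {1..8 * int e + 4} \<times> {1..8 * int e + 4}" using h pxy by auto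
  qed
qed simp

lemma gI_TT: "p \<in> TT e \<Longrightarrow> gI p \<in> TT e"
proof -
  assume p: "p \<in> TT e"
  obtain x y where pxy: "p = (x, y)" by (cases p)
  obtain u v where uv: "gI (x, y) = (u, v)" by (cases "gI (x, y)")
  have h: "0 < x" "0 < y" "odd x" "odd y" "x ^ 2 + 3 * y ^ 2 = 8 * int e + 4" using p by (auto simp: TT_mem pxy)
  have "u > 0 \<and> v > 0 \<and> odd u \<and> odd v" using gI_pos[OF h(3,4,1,2) uv] .
  moreover have "u ^ 2 + 3 * v ^ 2 = x ^ 2 + 3 * y ^ 2" using gI_norm[OF h(3,4) uv] .
  ultimately show ?thesis using h by (simp add: pxy uv TT_mem)
qed

lemma gI_TT_inv: "p \<in> TT e \<Longrightarrow> gI (gI p) = p"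
  by (cases p) (auto simp: TT_mem intro: gI_inv)

lemma TT_fix: "{p \<in> TT e. gI p = p} = {p \<in> TT e. fst p = snd p} \<union> {p \<in> TT e. fst p = 3 * snd p}"
proof -
  have "gI p = p \<longleftrightarrow> fst p = snd p \<or> fst p = 3 * snd p" if "p \<in> TT e" for p
    using that by (cases p) (simp add: TT_mem gI_fix)
  then have "{p \<in> TT e. gI p = p} = {p \<in> TT e. fst p = snd p \<or> fst p = 3 * snd p}"
    by (intro Collect_cong) auto
  also have "\<dots> = {p \<in> TT e. fst p = snd p} \<union> {p \<in> TT e. fst p = 3 * snd p}" by auto
  finally show ?thesis .
qed

lemma card_fix: "(of_nat (card (TT e)) :: bit) =
    of_nat (card {p \<in> TT e. fst p = snd p}) + of_nat (card {p \<in> TT e. fst p = 3 * snd p})"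
proof -
  have "(of_nat (card (TT e)) :: bit) = of_nat (card {p \<in> TT e. gI p = p})"
    by (rule parity_inv) (auto simp: TT_finite gI_TT gI_TT_inv)
  also have "card {p \<in> TT e. gI p = p} = card {p \<in> TT e. fst p = snd p} + card {p \<in> TT e. fst p = 3 * snd p}"
    unfolding TT_fix
  proof (rule card_Un_disjoint)
    show "finite {p \<in> TT e. fst p = snd p}" "finite {p \<in> TT e. fst p = 3 * snd p}"
      using TT_finite by auto
    show "{p \<in> TT e. fst p = snd p} \<inter> {p \<in> TT e. fst p = 3 * snd p} = {}"
      by (auto simp: TT_def)
  qed
  finally show ?thesis by simp
qed

lemma sq_witness:
  assumes "x ^ 2 = 8 * f + (1::int)"
  shows "\<bar>x\<bar> > 0" "odd \<bar>x\<bar>" "\<bar>x\<bar> ^ 2 = 8 * f + 1"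
proof -
  have "x \<noteq> 0" using assms by (auto, presburger)
  then show "\<bar>x\<bar> > 0" by simp
  have "odd (x ^ 2)" using assms by simp
  then show "odd \<bar>x\<bar>" by simp
  show "\<bar>x\<bar> ^ 2 = 8 * f + 1" using assms by simp
qed

lemma F1_card: "(of_nat (card {p \<in> TT e. fst p = snd p}) :: bit) = (fps_nth ((dil 4 psi :: bit fps)) e)"
proof (cases "4 dvd e \<and> (\<exists>x::int. x ^ 2 = 8 * int (e div 4) + 1)")
  case True
  then obtain x where x: "x ^ 2 = 8 * int (e div 4) + 1" by blast
  define z where "z = \<bar>x\<bar>"
  have z: "z > 0" "odd z" "z ^ 2 = 8 * int (e div 4) + 1" using sq_witness[OF x] by (simp_all add: z_def)
  have e4: "int e = 4 * int (e div 4)" using True by auto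
  have "{p \<in> TT e. fst p = snd p} = {(z, z)}"
  proof
    show "{(z, z)} \<subseteq> {p \<in> TT e. fst p = snd p}" using z e4 by (simp add: TT_mem)
    show "{p \<in> TT e. fst p = snd p} \<subseteq> {(z, z)}"
    proof
      fix p assume "p \<in> {p \<in> TT e. fst p = snd p}"
      then obtain w where p: "p = (w, w)" "w > 0" "w ^ 2 + 3 * w ^ 2 = 8 * int e + 4"
        by (cases p) (auto simp: TT_mem)
      then have "w ^ 2 = z ^ 2" using z e4 by simp
      then have "w = z" using p(2) z(1) by simp
      then show "p \<in> {(z, z)}" using p by simp
    qed
  qed
  moreover have "(fps_nth ((dil 4 psi :: bit fps)) e) = 1" using True by (auto simp: dil_nth psi_nth)
  ultimately show ?thesis by simp
next
  case False
  have "{p \<in> TT e. fst p = snd p} = {}"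
  proof (rule ccontr)
    assume "{p \<in> TT e. fst p = snd p} \<noteq> {}"
    then obtain w where p: "w > 0" "odd w" "w ^ 2 + 3 * w ^ 2 = 8 * int e + 4"
      by (auto simp: TT_def)
    obtain a where a: "w ^ 2 = 8 * a + 1" using odd_sq_mod8[OF p(2)] by blast
    have ea: "int e = 4 * a" using p(3) a by simp
    then have "4 dvd e" by presburger
    moreover have "int (e div 4) = a" using ea by simp
    ultimately show False using False a by auto
  qed
  then have c0: "card {p \<in> TT e. fst p = snd p} = 0" by (simp only: card.empty)
  have d0: "(fps_nth ((dil 4 psi :: bit fps)) e) = 0" using False by (auto simp: dil_nth psi_nth)
  show ?thesis by (simp only: c0 d0 of_nat_0)
qed

lemma F2_card: "(of_nat (card {p \<in> TT e. fst p = 3 * snd p}) :: bit) = (fps_nth ((fps_X * dil 12 psi :: bit fps)) e)"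
proof (cases "e \<noteq> 0 \<and> 12 dvd (e - 1) \<and> (\<exists>x::int. x ^ 2 = 8 * int ((e - 1) div 12) + 1)")
  case True
  then obtain x where x: "x ^ 2 = 8 * int ((e - 1) div 12) + 1" by blast
  define z where "z = \<bar>x\<bar>"
  have z: "z > 0" "odd z" "z ^ 2 = 8 * int ((e - 1) div 12) + 1" using sq_witness[OF x] by (simp_all add: z_def)
  have e12: "int e = 12 * int ((e - 1) div 12) + 1" using True by auto
  have "{p \<in> TT e. fst p = 3 * snd p} = {(3 * z, z)}"
  proof
    have "(3 * z) ^ 2 = 9 * z ^ 2" by (simp add: power_mult_distrib)
    then show "{(3 * z, z)} \<subseteq> {p \<in> TT e. fst p = 3 * snd p}" using z e12 by (simp add: TT_mem)
    show "{p \<in> TT e. fst p = 3 * snd p} \<subseteq> {(3 * z, z)}"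
    proof
      fix p assume "p \<in> {p \<in> TT e. fst p = 3 * snd p}"
      then obtain w where p: "p = (3 * w, w)" "w > 0" "(3 * w) ^ 2 + 3 * w ^ 2 = 8 * int e + 4"
        by (cases p) (auto simp: TT_mem)
      moreover have "(3 * w) ^ 2 = 9 * w ^ 2" by (simp add: power_mult_distrib)
      ultimately have "w ^ 2 = z ^ 2" using z e12 by simp
      then have "w = z" using p(2) z(1) by simp
      then show "p \<in> {(3 * z, z)}" using p by simp
    qed
  qed
  moreover have "(fps_nth ((fps_X * dil 12 psi :: bit fps)) e) = 1" using True by (auto simp: dil_nth psi_nth)
  ultimately show ?thesis by simp
next
  case False
  have "{p \<in> TT e. fst p = 3 * snd p} = {}"
  proof (rule ccontr)
    assume "{p \<in> TT e. fst p = 3 * snd p} \<noteq> {}"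
    then obtain w where p: "w > 0" "odd w" "(3 * w) ^ 2 + 3 * w ^ 2 = 8 * int e + 4"
      by (auto simp: TT_def)
    moreover have "(3 * w) ^ 2 = 9 * w ^ 2" by (simp add: power_mult_distrib)
    ultimately have p3: "12 * w ^ 2 = 8 * int e + 4" by simp
    obtain a where a: "w ^ 2 = 8 * a + 1" using odd_sq_mod8[OF p(2)] by blast
    have ea: "int e = 12 * a + 1" using p3 a by simp
    then have "e \<noteq> 0" "12 dvd (e - 1)" by presburger+
    moreover have "int ((e - 1) div 12) = a" using ea by simp
    ultimately show False using False a by auto
  qed
  then have c0: "card {p \<in> TT e. fst p = 3 * snd p} = 0" by (simp only: card.empty)
  have d0: "(fps_nth ((fps_X * dil 12 psi :: bit fps)) e) = 0" using False by (auto simp: dil_nth psi_nth)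
  show ?thesis by (simp only: c0 d0 of_nat_0)
qed

lemma TT_helper:
  assumes "(x, y) \<in> TT e"
  shows "\<exists>a b. x ^ 2 = 8 * a + 1 \<and> y ^ 2 = 8 * b + 1 \<and> 0 \<le> a \<and> 0 \<le> b \<and> int e = a + 3 * b"
proof -
  have h: "0 < x" "0 < y" "odd x" "odd y" "x ^ 2 + 3 * y ^ 2 = 8 * int e + 4" using assms by (auto simp: TT_mem)
  obtain a where a: "x ^ 2 = 8 * a + 1" using odd_sq_mod8[OF h(3)] by blast
  obtain b where b: "y ^ 2 = 8 * b + 1" using odd_sq_mod8[OF h(4)] by blast
  have "x ^ 2 > 0" "y ^ 2 > 0" using h by simp_all
  then have "0 \<le> a" "0 \<le> b" using a b by simp_all
  moreover have "int e = a + 3 * b" using h(5) a b by simp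
  ultimately show ?thesis using a b by blast
qed

definition hT :: "int \<times> int \<Rightarrow> nat" where "hT p = nat ((fst p ^ 2 - 1) div 8)"

lemma K2_lhs_card:
  "card {i \<in> {0..e}. (\<exists>x::int. x ^ 2 = 8 * int i + 1) \<and> 3 dvd (e - i) \<and> (\<exists>y::int. y ^ 2 = 8 * int ((e - i) div 3) + 1)}
   = card (TT e)"
proof -
  let ?S = "{i \<in> {0..e}. (\<exists>x::int. x ^ 2 = 8 * int i + 1) \<and> 3 dvd (e - i) \<and> (\<exists>y::int. y ^ 2 = 8 * int ((e - i) div 3) + 1)}"
  have "bij_betw hT (TT e) ?S"
  proof (rule bij_betw_imageI)
    show "inj_on hT (TT e)"
    proof (rule inj_onI)
      fix p q assume p: "p \<in> TT e" and q: "q \<in> TT e" and hpq: "hT p = hT q"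
      obtain x y where pxy: "p = (x, y)" by (cases p)
      obtain x' y' where qxy: "q = (x', y')" by (cases q)
      obtain a b where ab: "x ^ 2 = 8 * a + 1" "y ^ 2 = 8 * b + 1" "0 \<le> a" "0 \<le> b" "int e = a + 3 * b"
        using TT_helper[of x y e] p pxy by auto
      obtain a' b' where ab': "x' ^ 2 = 8 * a' + 1" "y' ^ 2 = 8 * b' + 1" "0 \<le> a'" "0 \<le> b'" "int e = a' + 3 * b'"
        using TT_helper[of x' y' e] q qxy by auto
      have "nat a = nat a'" using hpq ab ab' by (simp add: hT_def pxy qxy)
      then have "a = a'" using ab(3) ab'(3) by simp
      then have "x ^ 2 = x' ^ 2" "y ^ 2 = y' ^ 2" using ab ab' by simp_all
      moreover have "x > 0" "x' > 0" "y > 0" "y' > 0" using p q by (auto simp: pxy qxy TT_mem)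
      ultimately have "x = x'" "y = y'" by simp_all
      then show "p = q" by (simp add: pxy qxy)
    qed
    show "hT ` TT e = ?S"
    proof
      show "hT ` TT e \<subseteq> ?S"
      proof
        fix i assume "i \<in> hT ` TT e"
        then obtain x y where p: "(x, y) \<in> TT e" and i: "i = hT (x, y)" by auto
        obtain a b where ab: "x ^ 2 = 8 * a + 1" "y ^ 2 = 8 * b + 1" "0 \<le> a" "0 \<le> b" "int e = a + 3 * b"
          using TT_helper[OF p] by auto
        have ia: "int i = a" using i ab by (simp add: hT_def)
        have ie: "i \<le> e" using ia ab by simp
        have eib: "int (e - i) = 3 * b" using ia ab ie by simp
        then have d3: "3 dvd (e - i)" by presburger
        have "int ((e - i) div 3) = b" using eib by simp
        then show "i \<in> ?S" using ie d3 ab ia by auto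
      qed
      show "?S \<subseteq> hT ` TT e"
      proof
        fix i assume "i \<in> ?S"
        then have i: "i \<le> e" "3 dvd (e - i)" and ex: "\<exists>x::int. x ^ 2 = 8 * int i + 1"
          and ey: "\<exists>y::int. y ^ 2 = 8 * int ((e - i) div 3) + 1" by auto
        obtain x where x: "x ^ 2 = 8 * int i + 1" using ex by blast
        obtain y where y: "y ^ 2 = 8 * int ((e - i) div 3) + 1" using ey by blast
        note zx = sq_witness[OF x] and zy = sq_witness[OF y]
        have c: "int e = int i + 3 * int ((e - i) div 3)" using i by auto
        have mem: "(\<bar>x\<bar>, \<bar>y\<bar>) \<in> TT e" using zx zy c by (simp add: TT_mem)
        have "hT (\<bar>x\<bar>, \<bar>y\<bar>) = i" using zx by (simp add: hT_def)
        then show "i \<in> hT ` TT e" using mem by (metis image_eqI)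
      qed
    qed
  qed
  then show ?thesis by (simp add: bij_betw_same_card)
qed

lemma K2: "(psi :: bit fps) * dil 3 psi = dil 4 psi + fps_X * dil 12 psi"
proof (rule fps_ext)
  fix e
  let ?Q = "\<lambda>i. (\<exists>x::int. x ^ 2 = 8 * int i + 1) \<and> 3 dvd (e - i) \<and> (\<exists>y::int. y ^ 2 = 8 * int ((e - i) div 3) + 1)"
  have "(fps_nth (((psi :: bit fps) * dil 3 psi)) e) = (\<Sum>i\<in>{0..e}. (fps_nth (psi) i) * (fps_nth (dil 3 psi) (e - i)))"
    by (simp add: fps_mult_nth)
  also have "\<dots> = (\<Sum>i\<in>{0..e}. (of_bool (?Q i) :: bit))"
    by (rule sum.cong) (auto simp: psi_nth dil_nth)
  also have "\<dots> = of_nat (card ({0..e} \<inter> {i. ?Q i}))" by simp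
  also have "{0..e} \<inter> {i. ?Q i} = {i \<in> {0..e}. ?Q i}" by auto
  also have "card \<dots> = card (TT e)" by (rule K2_lhs_card)
  also have "(of_nat (card (TT e)) :: bit) = (fps_nth ((dil 4 psi + fps_X * dil 12 psi :: bit fps)) e)"
    using card_fix F1_card F2_card by simp
  finally show "(fps_nth (((psi :: bit fps) * dil 3 psi)) e) = (fps_nth ((dil 4 psi + fps_X * dil 12 psi :: bit fps)) e)" .
qed


lemma bit_add_self: "(x::bit) + x = 0"
  by (cases x) simp_all

lemma bitfps_add_self: "(a::bit fps) + a = 0"
  by (rule fps_ext) (simp only: fps_add_nth bit_add_self fps_zero_nth)

lemma bitfps_uminus: "- (a::bit fps) = a"
  using bitfps_add_self[of a] by (simp add: add_eq_0_iff)

lemma bitfps_diff: "(a::bit fps) - b = a + b"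
  by (simp add: bitfps_uminus)

lemma bitfps_sq: "(1 + a :: bit fps) ^ 2 = 1 + a ^ 2"
proof -
  have "(1 + a :: bit fps) ^ 2 = 1 + (a + a) + a ^ 2" by (simp add: power2_eq_square algebra_simps)
  then show ?thesis by (simp only: bitfps_add_self add_0_right)
qed

lemma bitfps_sq_factor: "(1 - fps_X ^ j :: bit fps) ^ 2 = 1 - fps_X ^ (2 * j)"
  by (simp add: bitfps_diff bitfps_sq power_mult[symmetric] mult.commute)

lemma bitfps_4: "(1 + fps_X ^ j :: bit fps) ^ 4 = 1 + fps_X ^ (4 * j)"
proof -
  have "(1 + fps_X ^ j :: bit fps) ^ 4 = ((1 + fps_X ^ j) ^ 2) ^ 2" by (simp flip: power_mult)
  also have "\<dots> = 1 + fps_X ^ (4 * j)" by (simp add: bitfps_sq power_mult[symmetric] mult.commute)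
  finally show ?thesis .
qed

section \<open>q-binomials and Cauchy's identity\<close>

fun tri :: "nat \<Rightarrow> nat" where
  "tri 0 = 0"
| "tri (Suc k) = tri k + Suc k"

lemma tri2: "2 * tri k = k * (k + 1)"
  by (induction k) auto

fun qbin :: "'a::comm_ring_1 \<Rightarrow> nat \<Rightarrow> nat \<Rightarrow> 'a" where
  "qbin Q 0 k = (if k = 0 then 1 else 0)"
| "qbin Q (Suc N) 0 = 1"
| "qbin Q (Suc N) (Suc k) = qbin Q N k + Q ^ Suc k * qbin Q N (Suc k)"

lemma qbin_0[simp]: "qbin Q N 0 = 1"
  by (cases N) auto

lemma qbin_gt: "N < k \<Longrightarrow> qbin Q N k = 0"
  by (induction Q N k rule: qbin.induct) auto

definition CF :: "'a::comm_ring_1 \<Rightarrow> 'a \<Rightarrow> 'a \<Rightarrow> nat \<Rightarrow> nat \<Rightarrow> 'a" where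
  "CF Q x y N k = qbin Q N k * Q ^ tri k * y ^ k * x ^ (N - k)"

lemma CF_step: "CF Q x y (Suc N) (Suc k) = y * Q * CF Q x (y * Q) N k + x * CF Q x (y * Q) N (Suc k)"
proof (cases "k < N")
  case True
  then have xe: "x ^ (N - k) = x * x ^ (N - Suc k)"
    by (metis Suc_diff_Suc power_Suc)
  show ?thesis unfolding CF_def using xe by (simp add: algebra_simps power_add power_mult_distrib)
next
  case False
  then have "qbin Q N (Suc k) = 0" by (intro qbin_gt) auto
  then show ?thesis unfolding CF_def by (simp add: algebra_simps power_add power_mult_distrib)
qed

lemma cauchy: "(\<Prod>i\<in>{1..N}. x + y * Q ^ i) = (\<Sum>k\<in>{0..N}. CF Q x y N k)"
proof (induction N arbitrary: y)
  case 0
  show ?case by (simp add: CF_def)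
next
  case (Suc N)
  have L: "(\<Prod>i\<in>{1..Suc N}. x + y * Q ^ i) = (x + y * Q) * (\<Prod>i\<in>{1..N}. x + (y * Q) * Q ^ i)"
  proof -
    have "(\<Prod>i\<in>{1..Suc N}. x + y * Q ^ i) = (x + y * Q ^ 1) * (\<Prod>i\<in>{Suc 1..Suc N}. x + y * Q ^ i)"
      by (rule prod.atLeast_Suc_atMost) simp
    also have "(\<Prod>i\<in>{Suc 1..Suc N}. x + y * Q ^ i) = (\<Prod>i\<in>{1..N}. x + y * Q ^ Suc i)"
      by (rule prod.shift_bounds_cl_Suc_ivl)
    finally show ?thesis by (simp add: algebra_simps)
  qed
  let ?f = "CF Q x (y * Q) N"
  have top: "?f (Suc N) = 0" by (simp add: CF_def qbin_gt)
  have S1: "(\<Sum>k\<in>{0..N}. ?f (Suc k)) + ?f 0 = (\<Sum>k\<in>{0..N}. ?f k)"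
  proof -
    have "(\<Sum>k\<in>{0..Suc N}. ?f k) = ?f 0 + (\<Sum>k\<in>{0..N}. ?f (Suc k))"
      by (simp only: sum.atLeast0_atMost_Suc_shift comp_def)
    moreover have "(\<Sum>k\<in>{0..Suc N}. ?f k) = (\<Sum>k\<in>{0..N}. ?f k)"
      using top by (simp add: sum.atLeast0_atMost_Suc)
    ultimately show ?thesis by (simp add: algebra_simps)
  qed
  have c0: "CF Q x y (Suc N) 0 = x * ?f 0" by (simp add: CF_def)
  have "(\<Sum>k\<in>{0..Suc N}. CF Q x y (Suc N) k) = CF Q x y (Suc N) 0 + (\<Sum>k\<in>{0..N}. CF Q x y (Suc N) (Suc k))"
    by (simp only: sum.atLeast0_atMost_Suc_shift comp_def)
  also have "\<dots> = x * ?f 0 + (y * Q) * (\<Sum>k\<in>{0..N}. ?f k) + x * (\<Sum>k\<in>{0..N}. ?f (Suc k))"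
    by (simp add: c0 CF_step sum.distrib sum_distrib_left algebra_simps)
  also have "\<dots> = x * ((\<Sum>k\<in>{0..N}. ?f (Suc k)) + ?f 0) + (y * Q) * (\<Sum>k\<in>{0..N}. ?f k)"
    by (simp add: algebra_simps)
  also have "\<dots> = (x + y * Q) * (\<Sum>k\<in>{0..N}. ?f k)"
    by (simp only: S1) (simp add: algebra_simps)
  also have "\<dots> = (\<Prod>i\<in>{1..Suc N}. x + y * Q ^ i)"
    by (simp only: L Suc.IH)
  finally show ?case by simp
qed

definition qf :: "'a::comm_ring_1 \<Rightarrow> nat \<Rightarrow> 'a" where
  "qf Q m = (\<Prod>i\<in>{1..m}. 1 - Q ^ i)"

lemma qf_Suc: "qf Q (Suc m) = qf Q m * (1 - Q ^ Suc m)"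
  by (simp add: qf_def)

lemma qf_0[simp]: "qf Q 0 = 1"
  by (simp add: qf_def)

lemma qbin_fact: "k \<le> N \<Longrightarrow> qbin Q N k * qf Q k * qf Q (N - k) = qf Q N"
proof (induction N arbitrary: k)
  case 0
  then show ?case by simp
next
  case (Suc N)
  show ?case
  proof (cases k)
    case 0
    then show ?thesis by simp
  next
    case (Suc k')
    with Suc.prems have k': "k' \<le> N" by simp
    have A: "qbin Q N k' * qf Q (Suc k') * qf Q (N - k') = qf Q N * (1 - Q ^ Suc k')"
    proof -
      have "qbin Q N k' * qf Q (Suc k') * qf Q (N - k') = (qbin Q N k' * qf Q k' * qf Q (N - k')) * (1 - Q ^ Suc k')"
        by (simp add: qf_Suc algebra_simps)
      then show ?thesis using Suc.IH[OF k'] by simp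
    qed
    have B: "Q ^ Suc k' * qbin Q N (Suc k') * qf Q (Suc k') * qf Q (N - k') = qf Q N * (Q ^ Suc k' - Q ^ Suc N)"
    proof (cases "Suc k' \<le> N")
      case True
      have "N - k' = Suc (N - Suc k')" using True by simp
      then have qN: "qf Q (N - k') = qf Q (N - Suc k') * (1 - Q ^ (N - k'))" by (simp add: qf_Suc)
      have "Q ^ Suc k' * qbin Q N (Suc k') * qf Q (Suc k') * qf Q (N - k')
          = Q ^ Suc k' * (qbin Q N (Suc k') * qf Q (Suc k') * qf Q (N - Suc k')) * (1 - Q ^ (N - k'))"
        by (simp add: qN algebra_simps)
      also have "\<dots> = Q ^ Suc k' * qf Q N * (1 - Q ^ (N - k'))" using Suc.IH[OF True] by simp
      also have "\<dots> = qf Q N * (Q ^ Suc k' - Q ^ Suc k' * Q ^ (N - k'))" by (simp add: algebra_simps)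
      also have "Q ^ Suc k' * Q ^ (N - k') = Q ^ Suc N"
      proof -
        have "Q ^ Suc k' * Q ^ (N - k') = Q ^ (Suc k' + (N - k'))" by (simp only: power_add)
        also have "Suc k' + (N - k') = Suc N" using k' by simp
        finally show ?thesis .
      qed
      finally show ?thesis .
    next
      case False
      then have qz: "qbin Q N (Suc k') = 0" by (intro qbin_gt) auto
      have "k' = N" using False k' by simp
      then show ?thesis using qz by simp
    qed
    have "qbin Q (Suc N) k * qf Q k * qf Q (Suc N - k) = qbin Q N k' * qf Q (Suc k') * qf Q (N - k') + Q ^ Suc k' * qbin Q N (Suc k') * qf Q (Suc k') * qf Q (N - k')"
      using Suc by (simp add: algebra_simps)
    also have "\<dots> = qf Q N * (1 - Q ^ Suc N)" by (simp only: A B) (simp add: algebra_simps)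
    also have "\<dots> = qf Q (Suc N)" by (simp add: qf_Suc)
    finally show ?thesis .
  qed
qed

section \<open>Truncation lemmas in char 2\<close>

lemma eqm_sum: "(\<And>k. k \<in> S \<Longrightarrow> eqm K (f k) (g k)) \<Longrightarrow> eqm K (\<Sum>k\<in>S. f k) (\<Sum>k\<in>S. g k)"
  unfolding eqm_def fps_sum_nth by (auto intro!: sum.cong)

lemma qf_trunc:
  assumes "M \<le> M'" "K \<le> 4 * (M + 1)"
  shows "eqm K (qf (fps_X ^ 4) M' :: 'a::comm_ring_1 fps) (qf (fps_X ^ 4) M)"
proof -
  have split: "{1..M'} = {1..M} \<union> {M+1..M'}" using assms by auto
  have "qf (fps_X ^ 4) M' = (qf (fps_X ^ 4) M :: 'a fps) * (\<Prod>i\<in>{M+1..M'}. 1 - (fps_X ^ 4) ^ i)"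
    unfolding qf_def split by (rule prod.union_disjoint) auto
  moreover have "eqm K (\<Prod>i\<in>{M+1..M'}. 1 - (fps_X ^ 4) ^ i :: 'a fps) 1"
  proof (rule eqm_prod_one)
    fix i assume "i \<in> {M+1..M'}"
    then have "K \<le> 4 * i" using assms by auto
    then show "eqm K (1 - (fps_X ^ 4) ^ i :: 'a fps) 1"
      by (simp add: power_mult[symmetric] eqm_one_minus)
  qed
  ultimately show ?thesis using eqm_multL[of K _ 1 "qf (fps_X ^ 4) M :: 'a fps"] by simp
qed

lemma fps_prod_nth0: "(fps_nth ((\<Prod>i\<in>S. f i :: 'a::comm_ring_1 fps)) 0) = (\<Prod>i\<in>S. (fps_nth (f i) 0))"
  by (induction S rule: infinite_finite_induct) simp_all

lemma qf_nth0: "(fps_nth ((qf (fps_X ^ 4) m :: 'a::comm_ring_1 fps)) 0) = 1"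
  unfolding qf_def fps_prod_nth0 by (intro prod.neutral) (auto simp: power_mult[symmetric])


lemma qbin_trunc:
  assumes "k \<le> N" "K \<le> 4 * (k + 1)" "K \<le> 4 * (N - k + 1)"
  shows "eqm K (qbin (fps_X ^ 4) N k * qf (fps_X ^ 4) N :: bit fps) 1"
proof -
  let ?Q = "fps_X ^ 4 :: bit fps"
  let ?b = "qbin ?Q N k"
  have fact: "?b * qf ?Q k * qf ?Q (N - k) = qf ?Q N" by (rule qbin_fact[OF assms(1)])
  have t1: "eqm K (qf ?Q N) (qf ?Q (N - k))" by (rule qf_trunc) (use assms in auto)
  have t2: "eqm K (qf ?Q N) (qf ?Q k)" by (rule qf_trunc) (use assms in auto)
  have "eqm K ((?b * qf ?Q (N - k)) * qf ?Q k) (1 * qf ?Q k)"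
    using t2 fact by (simp add: algebra_simps)
  then have "eqm K ((?b * qf ?Q (N - k)) * qf ?Q k * inverse (qf ?Q k)) (1 * qf ?Q k * inverse (qf ?Q k))"
    by (rule eqm_multR)
  moreover have inv: "qf ?Q k * inverse (qf ?Q k) = 1"
    by (rule inverse_mult_eq_1') (simp add: qf_nth0)
  ultimately have t3: "eqm K (?b * qf ?Q (N - k)) 1" by (simp add: mult.assoc)
  have "eqm K (?b * qf ?Q N) (?b * qf ?Q (N - k))" by (rule eqm_multL[OF t1])
  then show ?thesis using t3 by (rule eqm_trans)
qed

definition ee :: "nat \<Rightarrow> nat \<Rightarrow> nat" where
  "ee n k = nat (2 * (int k - int n) ^ 2 + (int k - int n))"

lemma ee_nonneg: "0 \<le> 2 * d ^ 2 + (d::int)"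
proof (cases "d \<ge> 0")
  case True then show ?thesis by simp
next
  case False
  have "2 * d ^ 2 + d = d * (2 * d + 1)" by (simp add: power2_eq_square algebra_simps)
  moreover have "0 \<le> d * (2 * d + 1)" using False by (intro mult_nonpos_nonpos) auto
  ultimately show ?thesis by simp
qed

lemma ee_ge: "\<bar>d\<bar> \<le> 2 * d ^ 2 + (d::int)"
proof (cases "d \<ge> 0")
  case True
  have "0 \<le> d ^ 2" by simp
  then show ?thesis using True by simp
next
  case False
  have "2 * d ^ 2 + 2 * d = 2 * (d * (d + 1))" by (simp add: power2_eq_square algebra_simps)
  moreover have "0 \<le> d * (d + 1)" using False by (intro mult_nonpos_nonpos) auto
  ultimately show ?thesis using False by simp
qed

lemma int_ee: "int (ee n k) = 2 * (int k - int n) ^ 2 + (int k - int n)"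
  unfolding ee_def using ee_nonneg by simp

lemma ee_iff: "ee n k = t \<longleftrightarrow> (4 * (int k - int n) + 1) ^ 2 = 8 * int t + 1"
proof -
  have "(4 * (int k - int n) + 1) ^ 2 = 8 * (2 * (int k - int n) ^ 2 + (int k - int n)) + 1"
    by (simp add: power2_eq_square algebra_simps)
  then have "(4 * (int k - int n) + 1) ^ 2 = 8 * int (ee n k) + 1" by (simp add: int_ee)
  then show ?thesis by auto
qed

lemma exp_id:
  assumes "k \<le> 2 * n"
  shows "4 * tri k + (4 * n + 1) * (2 * n - k) = (6 * n * n + 3 * n) + ee n k"
proof -
  have a: "int (4 * tri k) = 2 * int k * (int k + 1)"
    using arg_cong[OF tri2[of k], of int] by (simp add: algebra_simps)
  have b0: "int (2 * n - k) = 2 * int n - int k" using assms by simp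
  have b: "int ((4 * n + 1) * (2 * n - k)) = (4 * int n + 1) * (2 * int n - int k)"
    unfolding of_nat_mult b0 by simp
  have "int (4 * tri k + (4 * n + 1) * (2 * n - k)) = int ((6 * n * n + 3 * n) + ee n k)"
    unfolding of_nat_add a b int_ee by (simp add: power2_eq_square algebra_simps)
  then show ?thesis by (simp only: of_nat_eq_iff)
qed

lemma CF_spec:
  assumes "k \<le> 2 * n"
  shows "CF (fps_X ^ 4) (fps_X ^ (4 * n + 1)) (1 :: bit fps) (2 * n) k
       = fps_X ^ (6 * n * n + 3 * n) * (qbin (fps_X ^ 4) (2 * n) k * fps_X ^ (ee n k))"
proof -
  have "CF (fps_X ^ 4) (fps_X ^ (4 * n + 1)) (1 :: bit fps) (2 * n) k
      = qbin (fps_X ^ 4) (2 * n) k * fps_X ^ (4 * tri k + (4 * n + 1) * (2 * n - k))"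
  proof -
    have a: "(fps_X ^ 4 :: bit fps) ^ tri k = fps_X ^ (4 * tri k)" by (simp only: power_mult)
    have b: "(fps_X ^ (4 * n + 1) :: bit fps) ^ (2 * n - k) = fps_X ^ ((4 * n + 1) * (2 * n - k))"
      by (simp only: power_mult)
    show ?thesis by (simp only: CF_def a b power_one mult_1_right power_add[symmetric] mult.assoc)
  qed
  also have "4 * tri k + (4 * n + 1) * (2 * n - k) = (6 * n * n + 3 * n) + ee n k"
    by (rule exp_id[OF assms])
  finally show ?thesis by (simp add: power_add algebra_simps)
qed

definition pp :: "nat \<Rightarrow> bit fps" where
  "pp m = (\<Prod>j\<in>{1..m}. 1 + fps_X ^ j)"

definition Op :: "nat \<Rightarrow> bit fps" where
  "Op n = (\<Prod>i\<in>{..<n}. 1 + fps_X ^ (4 * i + 1)) * (\<Prod>i\<in>{1..n}. 1 + fps_X ^ (4 * i - 1))"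

lemma prod_Suc1: "(\<Prod>j\<in>{1..Suc m}. f j) = (\<Prod>j\<in>{1..m}. f j) * (f (Suc m) :: 'a::comm_monoid_mult)"
  by simp

lemma Osplit: "Op n * (\<Prod>j\<in>{1..2 * n}. 1 + fps_X ^ (2 * j)) = pp (4 * n)"
proof (induction n)
  case 0
  show ?case by (simp add: Op_def pp_def)
next
  case (Suc n)
  let ?P2 = "\<lambda>n. (\<Prod>j\<in>{1..2 * n}. 1 + fps_X ^ (2 * j) :: bit fps)"
  let ?a = "1 + fps_X ^ (4 * n + 1) :: bit fps"
  let ?b = "1 + fps_X ^ (4 * n + 2) :: bit fps"
  let ?c = "1 + fps_X ^ (4 * n + 3) :: bit fps"
  let ?d = "1 + fps_X ^ (4 * n + 4) :: bit fps"
  have e1: "Op (Suc n) = Op n * (?a * ?c)"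
  proof -
    have "Op (Suc n) = ((\<Prod>i\<in>{..<n}. 1 + fps_X ^ (4 * i + 1)) * (1 + fps_X ^ (4 * n + 1))) *
        ((\<Prod>i\<in>{1..n}. 1 + fps_X ^ (4 * i - 1)) * (1 + fps_X ^ (4 * Suc n - 1)))"
      unfolding Op_def by (simp only: prod.lessThan_Suc prod_Suc1)
    moreover have "4 * Suc n - 1 = 4 * n + 3" by simp
    ultimately show ?thesis unfolding Op_def by (simp only: ac_simps)
  qed
  have e2: "?P2 (Suc n) = ?P2 n * (?b * ?d)"
  proof -
    have "2 * Suc n = Suc (Suc (2 * n))" by simp
    then have "?P2 (Suc n) = ?P2 n * (1 + fps_X ^ (2 * Suc (2 * n))) * (1 + fps_X ^ (2 * Suc (Suc (2 * n))))"
      by (simp only: prod_Suc1)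
    moreover have "2 * Suc (2 * n) = 4 * n + 2" "2 * Suc (Suc (2 * n)) = 4 * n + 4" by simp_all
    ultimately show ?thesis by (simp only: ac_simps)
  qed
  have e3: "pp (4 * Suc n) = pp (4 * n) * (?a * ?b * ?c * ?d)"
  proof -
    have "4 * Suc n = Suc (Suc (Suc (Suc (4 * n))))" by simp
    then have "pp (4 * Suc n) = pp (4 * n) * (1 + fps_X ^ Suc (4 * n)) * (1 + fps_X ^ Suc (Suc (4 * n)))
        * (1 + fps_X ^ Suc (Suc (Suc (4 * n)))) * (1 + fps_X ^ Suc (Suc (Suc (Suc (4 * n)))))"
      unfolding pp_def by (simp only: prod_Suc1)
    moreover have "Suc (4 * n) = 4 * n + 1" "Suc (Suc (4 * n)) = 4 * n + 2"
      "Suc (Suc (Suc (4 * n))) = 4 * n + 3" "Suc (Suc (Suc (Suc (4 * n)))) = 4 * n + 4" by simp_all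
    ultimately show ?thesis by (simp only: ac_simps)
  qed
  have "Op (Suc n) * ?P2 (Suc n) = (Op n * ?P2 n) * (?a * ?b * ?c * ?d)"
    unfolding e1 e2 by (simp only: ac_simps)
  also have "\<dots> = pp (4 * Suc n)" by (simp only: Suc.IH e3)
  finally show ?case .
qed

lemma sum4: "(\<Sum>i\<in>{1..n}. 4 * i) = 2 * n * (n + (1::nat))"
  by (induction n) auto

lemma Lfact: "(\<Prod>i\<in>{1..2 * n}. fps_X ^ (4 * n + 1) + (1 :: bit fps) * (fps_X ^ 4) ^ i)
     = fps_X ^ (6 * n * n + 3 * n) * Op n"
proof -
  let ?f = "\<lambda>i. fps_X ^ (4 * n + 1) + fps_X ^ (4 * i) :: bit fps"
  have "(\<Prod>i\<in>{1..2 * n}. fps_X ^ (4 * n + 1) + (1 :: bit fps) * (fps_X ^ 4) ^ i) = (\<Prod>i\<in>{1..2 * n}. ?f i)"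
    by (simp add: power_mult)
  also have "(\<Prod>i\<in>{1..2 * n}. ?f i) = (\<Prod>i\<in>{1..n}. ?f i) * (\<Prod>i\<in>{1..n}. ?f (i + n))"
  proof -
    have se: "{1..2 * n} = {1..n} \<union> {1 + n..n + n}" by auto
    have "(\<Prod>i\<in>{1..2 * n}. ?f i) = (\<Prod>i\<in>{1..n} \<union> {1 + n..n + n}. ?f i)" by (simp only: se)
    also have "\<dots> = (\<Prod>i\<in>{1..n}. ?f i) * (\<Prod>i\<in>{1 + n..n + n}. ?f i)"
      by (rule prod.union_disjoint) auto
    also have "(\<Prod>i\<in>{1 + n..n + n}. ?f i) = (\<Prod>i\<in>{1..n}. ?f (i + n))"
      by (rule prod.shift_bounds_cl_nat_ivl)
    finally show ?thesis .
  qed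
  also have "(\<Prod>i\<in>{1..n}. ?f i) = (\<Prod>i\<in>{1..n}. fps_X ^ (4 * i) * (1 + fps_X ^ (4 * (n - i) + 1)))"
  proof (rule prod.cong)
    fix i assume "i \<in> {1..n}"
    then have eq: "4 * n + 1 = 4 * i + (4 * (n - i) + 1)" by arith
    have h: "(fps_X :: bit fps) ^ (4 * n + 1) = fps_X ^ (4 * i) * fps_X ^ (4 * (n - i) + 1)"
      by (subst eq) (rule power_add)
    show "?f i = fps_X ^ (4 * i) * (1 + fps_X ^ (4 * (n - i) + 1))"
      by (simp only: h) (simp add: algebra_simps)
  qed simp
  also have "(\<Prod>i\<in>{1..n}. ?f (i + n)) = (\<Prod>i\<in>{1..n}. fps_X ^ (4 * n + 1) * (1 + fps_X ^ (4 * i - 1)))"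
  proof (rule prod.cong)
    fix i assume "i \<in> {1..n}"
    then have eq: "4 * (i + n) = (4 * n + 1) + (4 * i - 1)" by arith
    have h: "(fps_X :: bit fps) ^ (4 * (i + n)) = fps_X ^ (4 * n + 1) * fps_X ^ (4 * i - 1)"
      by (subst eq) (rule power_add)
    show "?f (i + n) = fps_X ^ (4 * n + 1) * (1 + fps_X ^ (4 * i - 1))"
      by (simp only: h) (simp add: algebra_simps)
  qed simp
  also have "(\<Prod>i\<in>{1..n}. fps_X ^ (4 * i) * (1 + fps_X ^ (4 * (n - i) + 1) :: bit fps))
      = (\<Prod>i\<in>{1..n}. fps_X ^ (4 * i)) * (\<Prod>i\<in>{1..n}. (1 + fps_X ^ (4 * (n - i) + 1) :: bit fps))"
    by (rule prod.distrib)
  also have "(\<Prod>i\<in>{1..n}. fps_X ^ (4 * n + 1) * (1 + fps_X ^ (4 * i - 1)) :: bit fps)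
      = (\<Prod>i\<in>{1..n}. fps_X ^ (4 * n + 1)) * (\<Prod>i\<in>{1..n}. (1 + fps_X ^ (4 * i - 1) :: bit fps))"
    by (rule prod.distrib)
  also have "(\<Prod>i\<in>{1..n}. fps_X ^ (4 * i) :: bit fps) = fps_X ^ (2 * n * (n + 1))"
    by (simp only: power_sum[symmetric] sum4)
  also have "(\<Prod>i\<in>{1..n}. fps_X ^ (4 * n + 1) :: bit fps) = fps_X ^ ((4 * n + 1) * n)"
    by (simp only: prod_constant card_atLeastAtMost diff_Suc_1 power_mult)
  also have "(\<Prod>i\<in>{1..n}. (1 + fps_X ^ (4 * (n - i) + 1) :: bit fps)) = (\<Prod>i\<in>{..<n}. 1 + fps_X ^ (4 * i + 1))"
    by (rule prod.reindex_bij_witness[where i = "\<lambda>i. n - i" and j = "\<lambda>i. n - i"]) auto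
  finally have "(\<Prod>i\<in>{1..2 * n}. fps_X ^ (4 * n + 1) + (1 :: bit fps) * (fps_X ^ 4) ^ i)
     = fps_X ^ (2 * n * (n + 1)) * (\<Prod>i\<in>{..<n}. 1 + fps_X ^ (4 * i + 1)) *
       (fps_X ^ ((4 * n + 1) * n) * (\<Prod>i\<in>{1..n}. (1 + fps_X ^ (4 * i - 1))))" .
  also have "\<dots> = fps_X ^ (2 * n * (n + 1) + (4 * n + 1) * n) * Op n"
    unfolding Op_def by (simp only: power_add ac_simps)
  also have "2 * n * (n + 1) + (4 * n + 1) * n = 6 * n * n + 3 * n" by (simp add: algebra_simps)
  finally show ?thesis .
qed

definition RR :: "nat \<Rightarrow> bit fps" where
  "RR n = (\<Sum>k\<in>{0..2 * n}. qbin (fps_X ^ 4) (2 * n) k * fps_X ^ (ee n k))"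

lemma Op_RR: "Op n = RR n"
proof -
  have "fps_X ^ (6 * n * n + 3 * n) * Op n
      = (\<Sum>k\<in>{0..2 * n}. CF (fps_X ^ 4) (fps_X ^ (4 * n + 1)) (1 :: bit fps) (2 * n) k)"
    by (simp only: Lfact[symmetric] cauchy)
  also have "\<dots> = (\<Sum>k\<in>{0..2 * n}. fps_X ^ (6 * n * n + 3 * n) * (qbin (fps_X ^ 4) (2 * n) k * fps_X ^ (ee n k)))"
    by (rule sum.cong[OF refl], rule CF_spec) simp
  also have "\<dots> = fps_X ^ (6 * n * n + 3 * n) * RR n"
    by (simp add: RR_def sum_distrib_left)
  finally show ?thesis by simp
qed


lemma RR_trunc:
  assumes "2 * E \<le> n"
  shows "eqm (E + 1) (RR n * qf (fps_X ^ 4) (2 * n)) (\<Sum>k\<in>{0..2 * n}. fps_X ^ (ee n k) :: bit fps)"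
proof -
  have "RR n * qf (fps_X ^ 4) (2 * n)
      = (\<Sum>k\<in>{0..2 * n}. fps_X ^ (ee n k) * (qbin (fps_X ^ 4) (2 * n) k * qf (fps_X ^ 4) (2 * n)))"
    unfolding RR_def sum_distrib_right by (rule sum.cong) (simp_all add: ac_simps)
  moreover have "eqm (E + 1) (\<Sum>k\<in>{0..2 * n}. fps_X ^ (ee n k) * (qbin (fps_X ^ 4) (2 * n) k * qf (fps_X ^ 4) (2 * n)))
       (\<Sum>k\<in>{0..2 * n}. fps_X ^ (ee n k) :: bit fps)"
  proof (rule eqm_sum)
    fix k assume k: "k \<in> {0..2 * n}"
    show "eqm (E + 1) (fps_X ^ (ee n k) * (qbin (fps_X ^ 4) (2 * n) k * qf (fps_X ^ 4) (2 * n))) (fps_X ^ (ee n k) :: bit fps)"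
    proof (cases "E + 1 \<le> ee n k")
      case True
      have a: "eqm (E + 1) (fps_X ^ (ee n k) * (qbin (fps_X ^ 4) (2 * n) k * qf (fps_X ^ 4) (2 * n)) :: bit fps) 0"
        by (rule eqm_X_power_0[OF True])
      have b: "eqm (E + 1) (fps_X ^ (ee n k) * 1 :: bit fps) 0"
        by (rule eqm_X_power_0[OF True])
      show ?thesis using eqm_trans[OF a eqm_sym[OF b]] by simp
    next
      case False
      have "\<bar>int k - int n\<bar> \<le> int (ee n k)" using ee_ge[of "int k - int n"] by (simp add: int_ee)
      then have "\<bar>int k - int n\<bar> \<le> int E" using False by linarith
      then have "E \<le> k" "E \<le> 2 * n - k" using assms k by auto
      then have "eqm (E + 1) (qbin (fps_X ^ 4) (2 * n) k * qf (fps_X ^ 4) (2 * n) :: bit fps) 1"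
        using k by (intro qbin_trunc) auto
      then have "eqm (E + 1) (fps_X ^ (ee n k) * (qbin (fps_X ^ 4) (2 * n) k * qf (fps_X ^ 4) (2 * n))) (fps_X ^ (ee n k) * 1 :: bit fps)"
        by (rule eqm_multL)
      then show ?thesis by simp
    qed
  qed
  ultimately show ?thesis by simp
qed

lemma sumX_psi:
  assumes "E \<le> n"
  shows "eqm (E + 1) (\<Sum>k\<in>{0..2 * n}. fps_X ^ (ee n k) :: bit fps) psi"
  unfolding eqm_def
proof (intro allI impI)
  fix t assume t: "t < E + 1"
  have "(fps_nth ((\<Sum>k\<in>{0..2 * n}. fps_X ^ (ee n k) :: bit fps)) t) = (\<Sum>k\<in>{0..2 * n}. (of_bool (ee n k = t) :: bit))"
    unfolding fps_sum_nth fps_X_power_nth by (rule sum.cong) auto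
  also have "\<dots> = of_nat (card ({0..2 * n} \<inter> {k. ee n k = t}))" by simp
  also have "\<dots> = (fps_nth ((psi :: bit fps)) t)"
  proof (cases "\<exists>x::int. x ^ 2 = 8 * int t + 1")
    case True
    then obtain x :: int where x: "x ^ 2 = 8 * int t + 1" by blast
    define w where "w = \<bar>x\<bar>"
    have w: "odd w" "w ^ 2 = 8 * int t + 1" using sq_witness[OF x] by (simp_all add: w_def)
    define d where "d = (if w mod 4 = 1 then (w - 1) div 4 else - ((w + 1) div 4))"
    have "4 * d + 1 = w \<or> 4 * d + 1 = - w" using w(1) unfolding d_def by presburger
    then have d2: "(4 * d + 1) ^ 2 = 8 * int t + 1" using w(2) by auto
    have "(4 * d + 1) ^ 2 = 8 * (2 * d ^ 2 + d) + 1" by (simp add: power2_eq_square algebra_simps)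
    then have dt: "2 * d ^ 2 + d = int t" using d2 by simp
    have "\<bar>d\<bar> \<le> int n" using ee_ge[of d] dt t assms by simp
    define k0 where "k0 = nat (int n + d)"
    have k0: "int k0 - int n = d" "k0 \<in> {0..2 * n}" using \<open>\<bar>d\<bar> \<le> int n\<close> by (auto simp: k0_def)
    have "{0..2 * n} \<inter> {k. ee n k = t} = {k0}"
    proof
      have "(4 * (int k0 - int n) + 1) ^ 2 = 8 * int t + 1" by (simp only: k0(1) d2)
      then have "ee n k0 = t" by (simp only: ee_iff)
      then show "{k0} \<subseteq> {0..2 * n} \<inter> {k. ee n k = t}" using k0 by simp
      show "{0..2 * n} \<inter> {k. ee n k = t} \<subseteq> {k0}"
      proof
        fix k assume "k \<in> {0..2 * n} \<inter> {k. ee n k = t}"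
        then have "(4 * (int k - int n) + 1) ^ 2 = (4 * d + 1) ^ 2" using d2 by (simp add: ee_iff)
        then have "4 * (int k - int n) + 1 = 4 * d + 1 \<or> 4 * (int k - int n) + 1 = - (4 * d + 1)"
          by (simp add: power2_eq_iff)
        then have "int k - int n = d" by presburger
        then show "k \<in> {k0}" using k0 by simp
      qed
    qed
    then show ?thesis using True by (simp add: psi_nth)
  next
    case False
    have "{0..2 * n} \<inter> {k. ee n k = t} = {}"
      using False by (auto simp: ee_iff)
    then show ?thesis using False by (simp add: psi_nth)
  qed
  finally show "(fps_nth ((\<Sum>k\<in>{0..2 * n}. fps_X ^ (ee n k) :: bit fps)) t) = (fps_nth ((psi :: bit fps)) t)" .
qed

lemma qf_pp: "qf (fps_X ^ 4) m = pp m ^ 4"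
  unfolding qf_def pp_def prod_power_distrib
  by (rule prod.cong) (simp_all add: bitfps_diff bitfps_4 power_mult[symmetric] mult.commute)

lemma pp_sq: "pp m ^ 2 = (\<Prod>j\<in>{1..m}. 1 + fps_X ^ (2 * j))"
  unfolding pp_def prod_power_distrib
  by (rule prod.cong) (simp_all add: bitfps_sq power_mult[symmetric] mult.commute)

lemma qp1_pp: "K \<le> M + 1 \<Longrightarrow> eqm K (qp 1) (pp M)"
proof -
  assume "K \<le> M + 1"
  then have "eqm K (qp 1) (\<Prod>j\<in>{1..M}. (1 - fps_X ^ (1 * j)) :: bit fps)" by (intro qp_eqm) auto
  moreover have "(\<Prod>j\<in>{1..M}. (1 - fps_X ^ (1 * j)) :: bit fps) = pp M"
    by (simp add: pp_def bitfps_diff)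
  ultimately show ?thesis by simp
qed

lemma K1: "(qp 1 :: bit fps) ^ 3 = psi"
proof (rule fps_ext)
  fix E :: nat
  define n where "n = 2 * E + 1"
  have nE: "2 * E \<le> n" "E \<le> n" by (simp_all add: n_def)
  have a: "eqm (E + 1) (RR n * qf (fps_X ^ 4) (2 * n)) psi"
    by (rule eqm_trans[OF RR_trunc[OF nE(1)] sumX_psi[OF nE(2)]])
  have "RR n * qf (fps_X ^ 4) (2 * n) = pp (4 * n) * pp (2 * n) ^ 2"
  proof -
    have q: "qf (fps_X ^ 4) (2 * n) = pp (2 * n) ^ 2 * pp (2 * n) ^ 2"
      by (simp add: qf_pp flip: power_add)
    have "RR n * qf (fps_X ^ 4) (2 * n) = (Op n * pp (2 * n) ^ 2) * pp (2 * n) ^ 2"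
      by (simp only: q Op_RR mult.assoc)
    also have "Op n * pp (2 * n) ^ 2 = pp (4 * n)"
      unfolding pp_sq by (rule Osplit)
    finally show ?thesis .
  qed
  with a have b: "eqm (E + 1) (pp (4 * n) * pp (2 * n) ^ 2) psi" by simp
  have c: "eqm (E + 1) ((qp 1 :: bit fps) * qp 1 ^ 2) (pp (4 * n) * pp (2 * n) ^ 2)"
    by (intro eqm_mult eqm_power qp1_pp) (simp_all add: n_def)
  have "eqm (E + 1) ((qp 1 :: bit fps) ^ 3) psi"
    using eqm_trans[OF c b] by (simp add: power_Suc[symmetric] numeral_3_eq_3)
  then show "(fps_nth ((qp 1 ^ 3 :: bit fps)) E) = (fps_nth ((psi :: bit fps)) E)" by (simp add: eqm_def)
qed


lemma qp2_bit: "(qp 2 :: bit fps) = qp 1 ^ 2"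
proof (rule fps_ext)
  fix n
  let ?P = "\<lambda>m. (\<Prod>j\<in>{1..n}. (1 - fps_X ^ (m * j))) :: bit fps"
  have e1: "eqm (n+1) (qp 2) (?P 2)" by (rule qp_eqm) auto
  have e2: "eqm (n+1) (qp 1) (?P 1)" by (rule qp_eqm) auto
  have e3: "eqm (n+1) (qp 1 ^ 2) (?P 1 ^ 2)" by (rule eqm_power[OF e2])
  have "?P 1 ^ 2 = ?P 2"
    by (simp add: prod_power_distrib bitfps_sq_factor del: mult_1)
  then show "(fps_nth (qp 2) n) = (fps_nth ((qp 1 ^ 2 :: bit fps)) n)"
    using eqm_nth[OF e1, of n] eqm_nth[OF e3, of n] by simp
qed

lemma K1s: "(qp (Suc 0) :: bit fps) ^ 3 = psi"
  using K1 by simp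

lemma dil_nth0[simp]: "(fps_nth (dil k A) 0) = (fps_nth (A) 0)"
  by (simp add: dil_nth)

lemma main_bit:
  fixes c :: "bit fps"
  assumes hc: "c * (qp 1 * qp 6 ^ 3) ^ 3 = (qp 2 * qp 3 ^ 3) ^ 3"
    and ns: "\<not> (\<exists>x::int. x ^ 2 = 8 * int t + 1)"
  shows "(fps_nth (c) (24 * t + 4)) = 0"
proof -
  define \<psi> where "\<psi> = (psi :: bit fps)"
  have q3: "qp 3 = dil 3 (qp 1 :: bit fps)" by (rule qp_dil) simp
  have q6: "(qp 6 :: bit fps) = qp 3 ^ 2"
  proof -
    have "(qp 6 :: bit fps) = dil 6 (qp 1)" by (rule qp_dil) simp
    also have "\<dots> = dil 3 (dil 2 (qp 1))" by (simp add: dil_dil)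
    also have "\<dots> = dil 3 (qp 1 ^ 2)" using qp_dil[of 2, where 'a=bit] qp2_bit by simp
    also have "\<dots> = qp 3 ^ 2" by (simp add: dil_power q3)
    finally show ?thesis .
  qed
  have sq: "\<psi> ^ 2 = dil 2 \<psi>"
  proof -
    have "\<psi> ^ 2 = (qp 1 ^ 2) ^ 3" by (simp add: \<psi>_def K1[symmetric] power_mult[symmetric] mult.commute)
    also have "\<dots> = qp 2 ^ 3" by (simp add: qp2_bit)
    also have "\<dots> = dil 2 (qp 1) ^ 3" using qp_dil[of 2, where 'a=bit] by simp
    also have "\<dots> = dil 2 \<psi>" using dil_power[of 2 "qp 1 :: bit fps" 3] K1 by (simp add: \<psi>_def)
    finally show ?thesis .
  qed
  have p3: "qp 3 ^ 3 = dil 3 \<psi>" using dil_power[of 3 "qp 1 :: bit fps" 3] K1 by (simp add: q3 \<psi>_def)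
  have p6: "qp 6 ^ 3 = dil 6 \<psi>"
  proof -
    have "(qp 6 :: bit fps) ^ 3 = (qp 3 ^ 3) ^ 2" by (simp add: q6 power_mult[symmetric] mult.commute)
    also have "\<dots> = dil 3 (\<psi> ^ 2)" by (simp add: p3 dil_power)
    also have "\<dots> = dil 6 \<psi>" by (simp add: sq dil_dil)
    finally show ?thesis .
  qed
  have p2: "qp 2 ^ 3 = \<psi> ^ 2"
    by (simp add: qp2_bit \<psi>_def K1[symmetric] power_mult[symmetric] mult.commute)
  have s3: "dil 3 \<psi> ^ 2 = dil 6 \<psi>" by (simp add: dil_power[symmetric] sq dil_dil)
  have s6: "dil 6 \<psi> ^ 2 = dil 12 \<psi>" by (simp add: dil_power[symmetric] sq dil_dil)
  have nz: "\<psi> \<noteq> 0" "dil 3 \<psi> \<noteq> 0" "dil 12 \<psi> \<noteq> 0" "dil 6 \<psi> \<noteq> 0"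
    by (auto simp: \<psi>_def dest!: arg_cong[where f = "\<lambda>A. (fps_nth (A) 0)"])
  have "c * (\<psi> * dil 3 \<psi> ^ 6) = \<psi> ^ 2 * dil 3 \<psi> ^ 3"
  proof -
    have "c * (qp 1 ^ 3 * (qp 6 ^ 3) ^ 3) = qp 2 ^ 3 * (qp 3 ^ 3) ^ 3"
      using hc by (simp add: power_mult_distrib)
    then have "c * (\<psi> * dil 6 \<psi> ^ 3) = \<psi> ^ 2 * dil 3 \<psi> ^ 3"
      by (simp add: p6 p2 p3 \<psi>_def K1s)
    moreover have "dil 6 \<psi> ^ 3 = dil 3 \<psi> ^ 6"
      by (simp add: s3[symmetric] power_mult[symmetric])
    ultimately show ?thesis by simp
  qed
  then have "(\<psi> * dil 3 \<psi> ^ 3) * (c * dil 3 \<psi> ^ 3) = (\<psi> * dil 3 \<psi> ^ 3) * \<psi>"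
    by (simp add: algebra_simps power2_eq_square power_add[symmetric] eval_nat_numeral)
  then have c1: "c * dil 3 \<psi> ^ 3 = \<psi>" using nz by simp
  have k2: "\<psi> * dil 3 \<psi> = dil 4 \<psi> + fps_X * dil 12 \<psi>" unfolding \<psi>_def by (rule K2)
  have s34: "dil 3 \<psi> ^ 4 = dil 12 \<psi>"
    by (simp add: s6[symmetric] s3[symmetric] power_mult[symmetric])
  have c2: "(c - fps_X) * dil 12 \<psi> = dil 4 \<psi>"
  proof -
    have e: "dil 3 \<psi> ^ 4 = dil 3 \<psi> ^ 3 * dil 3 \<psi>" by (simp add: numeral_eq_Suc algebra_simps)
    have "c * dil 3 \<psi> ^ 4 = (c * dil 3 \<psi> ^ 3) * dil 3 \<psi>" by (simp only: e mult.assoc)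
    also have "\<dots> = \<psi> * dil 3 \<psi>" by (simp only: c1)
    finally have "c * dil 3 \<psi> ^ 4 = \<psi> * dil 3 \<psi>" .
    then show ?thesis using k2 s34 by (simp add: algebra_simps)
  qed
  define g where "g = \<psi> * inverse (dil 3 \<psi>)"
  have inv3: "inverse (dil 3 \<psi>) * dil 3 \<psi> = 1" by (rule inverse_mult_eq_1) (simp add: \<psi>_def)
  have g3: "g * dil 3 \<psi> = \<psi>" unfolding g_def using inv3 by (simp add: mult.assoc)
  have "dil 4 (g * dil 3 \<psi>) = dil 4 g * dil 12 \<psi>" by (simp add: dil_mult dil_dil)
  then have "dil 4 g * dil 12 \<psi> = dil 4 \<psi>" using g3 by simp
  with c2 have "(c - fps_X) * dil 12 \<psi> = dil 4 g * dil 12 \<psi>" by simp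
  then have cg: "c - fps_X = dil 4 g" using nz by simp
  define h where "h = dil 2 \<psi> * inverse (dil 3 \<psi>)"
  have h3: "h * dil 3 \<psi> = dil 2 \<psi>" unfolding h_def using inv3 by (simp add: mult.assoc)
  have "dil 2 (h * dil 3 \<psi>) = dil 2 h * dil 6 \<psi>" by (simp add: dil_mult dil_dil)
  moreover have "dil 2 (dil 2 \<psi>) = dil 4 \<psi>" by (simp add: dil_dil)
  ultimately have "dil 2 h * dil 6 \<psi> = dil 4 \<psi>" using h3 by simp
  moreover have "g * dil 6 \<psi> = dil 4 \<psi> + fps_X * dil 12 \<psi>"
  proof -
    have "g * dil 6 \<psi> = (g * dil 3 \<psi>) * dil 3 \<psi>" by (simp only: s3[symmetric] power2_eq_square mult.assoc)
    also have "\<dots> = \<psi> * dil 3 \<psi>" by (simp only: g3)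
    finally show ?thesis using k2 by simp
  qed
  ultimately have "g * dil 6 \<psi> = (dil 2 h + fps_X * dil 6 \<psi>) * dil 6 \<psi>"
    using s6 by (simp add: algebra_simps power2_eq_square)
  then have gh: "g = dil 2 h + fps_X * dil 6 \<psi>" using nz by simp
  have "(fps_nth (c) (24 * t + 4)) = (fps_nth ((c - fps_X)) (24 * t + 4))" by simp
  also have "\<dots> = (fps_nth (dil 4 g) (4 * (6 * t + 1)))"
  proof -
    have eq: "24 * t + 4 = 4 * (6 * t + 1)" by simp
    show ?thesis by (simp only: cg eq)
  qed
  also have "\<dots> = (fps_nth (g) (6 * t + 1))" by (rule dil_nth_mult) simp
  also have "\<dots> = (fps_nth ((dil 2 h)) (6 * t + 1)) + (fps_nth (dil 6 \<psi>) (6 * t))" using gh by simp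
  also have "\<dots> = (fps_nth (\<psi>) t)" using dil_nth_mult[of 6 \<psi> t] by (simp add: dil_nth)
  also have "\<dots> = 0" using ns by (simp add: \<psi>_def psi_nth)
  finally show ?thesis .
qed


definition Dn :: "int fps" where "Dn = qp 1 * qp 6 ^ 3"
definition Nn :: "int fps" where "Nn = qp 2 * qp 3 ^ 3"
definition Cn :: "int fps" where "Cn = Nn * fps_right_inverse Dn 1"

lemma Dn0: "(fps_nth (Dn) 0) = 1"
  by (simp add: Dn_def fps_nth_power_0)

lemma CnDn: "Cn * Dn = Nn"
proof -
  have "Dn * fps_right_inverse Dn 1 = 1" by (rule fps_right_inverse) (simp add: Dn0)
  then show ?thesis unfolding Cn_def by (simp add: algebra_simps)
qed

lemma j6P_Cn: "j6P = fmapI (Cn ^ 3)"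
proof -
  have D: "fmapI Dn = (qp 1 * qp 6 ^ 3 :: rat fps)"
    by (simp add: Dn_def fmapI_mult fmapI_power fmapI_qp)
  have N: "fmapI Nn = (qp 2 * qp 3 ^ 3 :: rat fps)"
    by (simp add: Nn_def fmapI_mult fmapI_power fmapI_qp)
  have D0: "(fps_nth ((fmapI Dn :: rat fps)) 0) \<noteq> 0" by (simp add: Dn0)
  have "fmapI Nn = (fmapI Cn * fmapI Dn :: rat fps)" by (simp add: CnDn[symmetric] fmapI_mult)
  then have "(fmapI Nn :: rat fps) / fmapI Dn = fmapI Cn"
    using D0 by (simp add: fps_divide_unit mult.assoc inverse_mult_eq_1')
  moreover have "j6P = (fmapI Nn / fmapI Dn) ^ 3" by (simp only: j6P_def qpoch_qp D N)
  ultimately show ?thesis by (simp add: fmapI_power)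
qed

lemma bit_of_int_zero: "(of_int z :: bit) = 0 \<Longrightarrow> even z"
proof (rule ccontr)
  assume "of_int z = (0::bit)" "odd z"
  then obtain k where "z = 2 * k + 1" by (auto elim: oddE)
  then have "(of_int z :: bit) = 2 * of_int k + 1" by simp
  also have "\<dots> = 1" by simp
  finally show False using \<open>of_int z = (0::bit)\<close> by simp
qed

lemma Cn_even:
  assumes "\<not> (\<exists>x::int. x ^ 2 = 8 * int t + 1)"
  shows "even ((fps_nth ((Cn ^ 3)) (24 * t + 4)))"
proof -
  have "(fmapI (Cn ^ 3) :: bit fps) * (qp 1 * qp 6 ^ 3) ^ 3 = (qp 2 * qp 3 ^ 3) ^ 3"
  proof -
    have "Cn ^ 3 * Dn ^ 3 = Nn ^ 3" by (simp add: CnDn[symmetric] power_mult_distrib)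
    then have "(fmapI (Cn ^ 3) :: bit fps) * fmapI (Dn ^ 3) = fmapI (Nn ^ 3)"
      by (simp add: fmapI_mult[symmetric])
    then show ?thesis by (simp add: Dn_def Nn_def fmapI_mult fmapI_power fmapI_qp)
  qed
  from main_bit[OF this assms] show ?thesis using bit_of_int_zero by simp
qed

theorem theorem3p4:
  fixes k n :: nat and p :: "nat \<Rightarrow> nat" and j :: int
  assumes primes: "\<forall>i\<in>{1..k+1}. prime (p i) \<and> p i mod 8 \<in> {3, 5, 7}"
    and ndvd: "\<not> int (p (k+1)) dvd j"
  shows "\<exists>m::int. J6 (3 * (\<Prod>i\<in>{1..k}. int (p i) ^ 2) * int (p (k+1))
                   * (8 * int (p (k+1)) * int n + 8 * j + int (p (k+1)))) = of_int (2 * m)"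
proof -
  define P where "P = (\<Prod>i\<in>{1..k}. int (p i))"
  define q where "q = int (p (k+1))"
  define B where "B = 8 * q * int n + 8 * j + q"
  define Xv where "Xv = P ^ 2 * q * B"
  have oddp: "odd (p i)" if "i \<in> {1..k+1}" for i
  proof -
    have "p i mod 8 \<in> {3,5,7}" using primes that by blast
    then have "p i mod 8 mod 2 = 1" by auto
    then show ?thesis by (simp add: mod_mod_cancel odd_iff_mod_2_eq_one)
  qed
  have oddP: "odd P" unfolding P_def by (auto simp: even_prod_iff oddp)
  have oddq: "odd q" unfolding q_def using oddp[of "k+1"] by simp
  have primeq: "prime q" unfolding q_def using primes by auto
  have oddB: "odd B" unfolding B_def using oddq by simp
  have arg: "3 * (\<Prod>i\<in>{1..k}. int (p i) ^ 2) * int (p (k+1))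
                   * (8 * int (p (k+1)) * int n + 8 * j + int (p (k+1))) = 3 * Xv"
    by (simp add: Xv_def P_def q_def B_def prod_power_distrib algebra_simps)
  have Xv1: "\<exists>a. Xv = 8 * a + 1"
  proof -
    obtain a where a: "P ^ 2 = 8 * a + 1" using odd_sq_mod8[OF oddP] by blast
    obtain b where b: "q ^ 2 = 8 * b + 1" using odd_sq_mod8[OF oddq] by blast
    have "q * B = 8 * (q * (q * int n + j)) + q ^ 2"
      by (simp add: B_def algebra_simps power2_eq_square)
    then have "q * B = 8 * (q * (q * int n + j) + b) + 1" by (simp add: b)
    then have "Xv = (8 * a + 1) * (8 * (q * (q * int n + j) + b) + 1)"
      by (simp add: Xv_def a[symmetric] mult.assoc)
    then show ?thesis by (intro exI[of _ "8 * a * (q * (q * int n + j) + b) + a + (q * (q * int n + j) + b)"]) (simp add: algebra_simps)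
  qed
  then obtain a where a: "Xv = 8 * a + 1" by blast
  show ?thesis
  proof (cases "a < 0")
    case True
    then have "3 * Xv < -1" using a by simp
    then have "J6 (3 * Xv) = 0" by (simp add: J6_def)
    then show ?thesis unfolding arg by (intro exI[of _ 0]) simp
  next
    case False
    define t where "t = nat a"
    have at: "a = int t" using False by (simp add: t_def)
    have N: "nat (3 * Xv + 1) = 24 * t + 4" using a at by simp
    have ns: "\<not> (\<exists>x::int. x ^ 2 = 8 * int t + 1)"
    proof
      assume "\<exists>x::int. x ^ 2 = 8 * int t + 1"
      then obtain x :: int where "x ^ 2 = 8 * int t + 1" by blast
      then have xs: "x ^ 2 = Xv" using a at by simp
      have pe: "prime_elem q" using primeq unfolding prime_def by blast
      have x0: "x \<noteq> 0"
      proof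
        assume "x = 0"
        then have "8 * a + 1 = 0" using xs a by simp
        then show False by presburger
      qed
      have nz: "P \<noteq> 0" "q \<noteq> 0" "B \<noteq> 0" "x \<noteq> 0"
        using oddP oddq oddB x0 by auto
      have qB: "\<not> q dvd B"
      proof
        assume "q dvd B"
        then have "q dvd B - q * (8 * int n + 1)" by simp
        then have "q dvd 8 * j" by (simp add: B_def algebra_simps)
        then have "q dvd 8 \<or> q dvd j" using primeq by (simp add: prime_dvd_mult_iff)
        moreover have "\<not> q dvd j" using ndvd q_def by simp
        moreover have "\<not> q dvd 8"
        proof
          assume "q dvd 8"
          then have "q dvd 2 ^ 3" by simp
          then have "q dvd 2" using primeq prime_dvd_power by blast
          then have "q = 2" using primeq by (intro primes_dvd_imp_eq) auto
          then show False using oddq by simp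
        qed
        ultimately show False by blast
      qed
      have "multiplicity q (x ^ 2) = 2 * multiplicity q (x)"
        using pe nz by (simp add: prime_elem_multiplicity_power_distrib)
      moreover have "multiplicity q Xv = 2 * multiplicity q P + 1"
      proof -
        have "multiplicity q Xv = multiplicity q (P ^ 2) + multiplicity q q + multiplicity q B"
          unfolding Xv_def using pe nz by (simp add: prime_elem_multiplicity_mult_distrib)
        also have "\<dots> = 2 * multiplicity q P + 1 + 0"
          using pe nz qB by (simp add: prime_elem_multiplicity_power_distrib multiplicity_self
              not_dvd_imp_multiplicity_0 prime_elem_not_unit)
        finally show ?thesis by simp
      qed
      ultimately have "2 * multiplicity q (x) = 2 * multiplicity q P + 1" using xs by simp
      then show False by presburger
    qed
    have "3 * Xv \<noteq> 0" "\<not> 3 * Xv < -1" using a at by auto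
    then have "J6 (3 * Xv) = of_int ((fps_nth ((Cn ^ 3)) (24 * t + 4)))"
      by (simp add: J6_def N[symmetric] j6P_Cn)
    moreover obtain m where "(fps_nth ((Cn ^ 3)) (24 * t + 4)) = 2 * m" using Cn_even[OF ns] by (auto elim: evenE)
    ultimately show ?thesis unfolding arg by (intro exI[of _ m]) simp
  qed
qed


end
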